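(* Assume $\sum_n n^2\pi(n)<\infty$. If $R_0\le1$, then $m=0$ is the unique solution in $[0,\bar\pi]$ of $\bar\mu_\infty(m)=m$. If $R_0>1$, then there exists a unique $m_\star\in(0,\bar\pi]$ with $\bar\mu_\infty(m_\star)=m_\star$.
   Context: $\lambda_L,\lambda_G,\gamma>0$; $\pi$ a probability distribution on $\mathbb N$ with mean $\bar\pi$. For constant $m\in[0,\bar\pi]$, $\mu_\infty(m)$ is the unique stationary distribution (with first marginal $\pi$) of $(\nu,X_t(m))$ where $\nu\sim\pi$ and $X_t(m) = X_0 + P_{inf}\big( \int_{0}^{t} [ \lambda_L X_s(m) + \lambda_G \frac{\nu}{\bar\pi}m ](1-\frac{X_s(m)}{\nu}) ds \big) - P_{rec}\big( \int_{0}^{t} \gamma X_s(m) ds \big)$ with independent standard Poisson processes; $\bar\mu_\infty(m)$ is the mean of the second coordinate under $\mu_\infty(m)$. $R_0=\frac{\lambda_G}{\bar\pi}\mathbb E\big[\nu\int_0^\infty I(t)dt\,\big|\,I(0)=1\big]$ where $\nu\sim\pi$ and $I(t)=I(0)+P_{inf}\big(\int_0^t\lambda_L(1-I(s)/\nu)I(s)ds\big)-P_{rec}\big(\int_0^t\gamma I(s)ds\big)$. *)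

theory Defs
  imports "HOL-Probability.Probability"
begin

definition pibar :: "nat pmf \<Rightarrow> real" where
  "pibar P = measure_pmf.expectation P real"

definition birth_rate :: "real \<Rightarrow> real \<Rightarrow> real \<Rightarrow> real \<Rightarrow> nat \<Rightarrow> nat \<Rightarrow> real" where
  "birth_rate lL lG pb m n x = (lL * real x + lG * (real n / pb) * m) * (1 - real x / real n)"

definition death_rate :: "real \<Rightarrow> nat \<Rightarrow> real" where
  "death_rate g x = g * real x"

definition gen :: "real \<Rightarrow> real \<Rightarrow> real \<Rightarrow> real \<Rightarrow> real \<Rightarrow> nat \<Rightarrow> nat \<Rightarrow> nat \<Rightarrow> real" where
  "gen lL lG g pb m n x y =
     (if y = Suc x then birth_rate lL lG pb m n x
      else if Suc y = x then death_rate g x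
      else if y = x then - (birth_rate lL lG pb m n x + death_rate g x)
      else 0)"

definition is_stationary ::
  "real \<Rightarrow> real \<Rightarrow> real \<Rightarrow> nat pmf \<Rightarrow> real \<Rightarrow> (nat \<Rightarrow> nat \<Rightarrow> real) \<Rightarrow> bool" where
  "is_stationary lL lG g P m mu \<longleftrightarrow>
     (\<forall>n x. 0 \<le> mu n x) \<and>
     (\<forall>n x. n < x \<longrightarrow> mu n x = 0) \<and>
     (\<forall>n. (\<Sum>x\<le>n. mu n x) = pmf P n) \<and>
     (\<forall>n y. y \<le> n \<longrightarrow> (\<Sum>x\<le>n. mu n x * gen lL lG g (pibar P) m n x y) = 0)"

definition mu_inf :: "real \<Rightarrow> real \<Rightarrow> real \<Rightarrow> nat pmf \<Rightarrow> real \<Rightarrow> nat \<Rightarrow> nat \<Rightarrow> real" where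
  "mu_inf lL lG g P m = (THE mu. is_stationary lL lG g P m mu)"

definition mubar :: "real \<Rightarrow> real \<Rightarrow> real \<Rightarrow> nat pmf \<Rightarrow> real \<Rightarrow> real" where
  "mubar lL lG g P m = (\<Sum>n. \<Sum>x\<le>n. real x * mu_inf lL lG g P m n x)"

text \<open>Total jump rate of the within-household process I (global infection switched off).\<close>
definition hold_rate :: "real \<Rightarrow> real \<Rightarrow> nat \<Rightarrow> nat \<Rightarrow> real" where
  "hold_rate lL g n x = birth_rate lL 0 1 0 n x + death_rate g x"

text \<open>Embedded jump chain of I started at I(0)=1: probability of being at state x \<ge> 1
  after k jumps (mass absorbed at 0 is dropped, as it contributes nothing to the area).\<close>
fun jump_dist :: "real \<Rightarrow> real \<Rightarrow> nat \<Rightarrow> nat \<Rightarrow> nat \<Rightarrow> real" where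
  "jump_dist lL g n 0 x = (if x = 1 then 1 else 0)"
| "jump_dist lL g n (Suc k) y =
     (if y = 0 then 0 else
        (if 2 \<le> y then jump_dist lL g n k (y - 1) *
              (birth_rate lL 0 1 0 n (y - 1) / hold_rate lL g n (y - 1)) else 0)
        + jump_dist lL g n k (Suc y) *
              (death_rate g (Suc y) / hold_rate lL g n (Suc y)))"

text \<open>E[ integral_0^infty I(t) dt | I(0)=1, nu = n ]: sum over jumps of the state value times
  the expected holding time 1/q(x).\<close>
definition expected_area :: "real \<Rightarrow> real \<Rightarrow> nat \<Rightarrow> ennreal" where
  "expected_area lL g n =
     (\<Sum>k. \<Sum>x\<in>{1..Suc k}. ennreal (jump_dist lL g n k x * real x / hold_rate lL g n x))"

definition R0 :: "real \<Rightarrow> real \<Rightarrow> real \<Rightarrow> nat pmf \<Rightarrow> ennreal" where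
  "R0 lL lG g P =
     ennreal (lG / pibar P) * (\<Sum>n. ennreal (real n * pmf P n) * expected_area lL g n)"

end

theory Submission
  imports Defs
begin

definition Dfun :: "real \<Rightarrow> nat \<Rightarrow> real \<Rightarrow> real" where
  "Dfun l m t = (\<Sum>x\<le>m. real (m choose x) * l ^ x * pochhammer t x)"

lemma Dfun_0 [simp]: "Dfun l 0 t = 1"
  by (simp add: Dfun_def)

lemma Dfun_Suc: "Dfun l (Suc m) t = Dfun l m t + l * t * Dfun l m (t + 1)"
proof -
  have "Dfun l (Suc m) t = 1 + (\<Sum>x\<le>m. real (Suc m choose Suc x) * l ^ Suc x * pochhammer t (Suc x))"
    unfolding Dfun_def by (subst sum.atMost_Suc_shift) simp
  also have "\<dots> = 1 + (\<Sum>x\<le>m. real (m choose Suc x) * l ^ Suc x * pochhammer t (Suc x))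
                 + (\<Sum>x\<le>m. real (m choose x) * l ^ Suc x * pochhammer t (Suc x))"
    by (simp add: sum.distrib algebra_simps)
  also have "1 + (\<Sum>x\<le>m. real (m choose Suc x) * l ^ Suc x * pochhammer t (Suc x)) = Dfun l m t"
  proof -
    have "Dfun l m t = (\<Sum>x\<le>Suc m. real (m choose x) * l ^ x * pochhammer t x)"
      unfolding Dfun_def by simp
    also have "\<dots> = 1 + (\<Sum>x\<le>m. real (m choose Suc x) * l ^ Suc x * pochhammer t (Suc x))"
      by (subst sum.atMost_Suc_shift) simp
    finally show ?thesis by simp
  qed
  also have "(\<Sum>x\<le>m. real (m choose x) * l ^ Suc x * pochhammer t (Suc x)) = l * t * Dfun l m (t+1)"
    unfolding Dfun_def by (simp add: sum_distrib_left pochhammer_rec algebra_simps)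
  finally show ?thesis .
qed

lemma Nsum_eq: "(\<Sum>x\<le>Suc m. real x * real (Suc m choose x) * l ^ x * pochhammer t x)
   = real (Suc m) * l * t * Dfun l m (t + 1)"
proof -
  have "(\<Sum>x\<le>Suc m. real x * real (Suc m choose x) * l ^ x * pochhammer t x)
     = (\<Sum>x\<le>m. real (Suc x) * real (Suc m choose Suc x) * l ^ Suc x * pochhammer t (Suc x))"
    by (subst sum.atMost_Suc_shift) simp
  also have "\<dots> = (\<Sum>x\<le>m. real (Suc m) * real (m choose x) * l ^ Suc x * pochhammer t (Suc x))"
  proof (rule sum.cong[OF refl])
    fix x
    have "Suc x * (Suc m choose Suc x) = Suc m * (m choose x)"
      using binomial_absorption[of x "Suc m"] by simp
    then have "real (Suc x) * real (Suc m choose Suc x) = real (Suc m) * real (m choose x)"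
      by (metis of_nat_mult)
    then show "real (Suc x) * real (Suc m choose Suc x) * l ^ Suc x * pochhammer t (Suc x)
       = real (Suc m) * real (m choose x) * l ^ Suc x * pochhammer t (Suc x)" by simp
  qed
  also have "\<dots> = real (Suc m) * l * t * Dfun l m (t + 1)"
    unfolding Dfun_def by (simp add: sum_distrib_left pochhammer_rec algebra_simps)
  finally show ?thesis .
qed

lemma Dfun_shift: "t * Dfun l m (t + 1) = t * Dfun l m t + (\<Sum>x\<le>m. real x * real (m choose x) * l ^ x * pochhammer t x)"
proof -
  have e: "t * pochhammer (t+1) x = pochhammer t x * (t + real x)" for x
    by (metis pochhammer_rec pochhammer_rec' mult.commute)
  have "t * Dfun l m (t + 1) = (\<Sum>x\<le>m. real (m choose x) * l ^ x * (t * pochhammer (t+1) x))"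
    unfolding Dfun_def by (simp add: sum_distrib_left algebra_simps)
  also have "\<dots> = (\<Sum>x\<le>m. t * (real (m choose x) * l ^ x * pochhammer t x) + real x * real (m choose x) * l ^ x * pochhammer t x)"
    unfolding e by (intro sum.cong) (auto simp: algebra_simps)
  also have "\<dots> = t * Dfun l m t + (\<Sum>x\<le>m. real x * real (m choose x) * l ^ x * pochhammer t x)"
    unfolding Dfun_def by (simp add: sum.distrib sum_distrib_left)
  finally show ?thesis .
qed

lemma Dfun_rec3: "Dfun l (Suc (Suc m)) t = (1 + l * (t + real (Suc m))) * Dfun l (Suc m) t - l * real (Suc m) * Dfun l m t"
proof -
  have N: "(\<Sum>x\<le>Suc m. real x * real (Suc m choose x) * l ^ x * pochhammer t x)
          = real (Suc m) * (Dfun l (Suc m) t - Dfun l m t)"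
    using Nsum_eq[of m l t] Dfun_Suc[of l m t] by simp
  have "Dfun l (Suc (Suc m)) t = Dfun l (Suc m) t + l * (t * Dfun l (Suc m) (t + 1))"
    using Dfun_Suc[of l "Suc m" t] by simp
  also have "\<dots> = Dfun l (Suc m) t + l * (t * Dfun l (Suc m) t + real (Suc m) * (Dfun l (Suc m) t - Dfun l m t))"
    using Dfun_shift[of t l "Suc m"] N by simp
  finally show ?thesis by (simp add: algebra_simps)
qed

lemma pochhammer_nonneg': "t \<ge> 0 \<Longrightarrow> pochhammer (t::real) x \<ge> 0"
  by (simp add: pochhammer_prod prod_nonneg)

lemma Dfun_ge1: "l \<ge> 0 \<Longrightarrow> t \<ge> 0 \<Longrightarrow> Dfun l m t \<ge> 1"
proof -
  assume a: "l \<ge> 0" "t \<ge> 0"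
  have "Dfun l m t = 1 + (\<Sum>x\<in>{1..m}. real (m choose x) * l ^ x * pochhammer t x)"
    unfolding Dfun_def by (simp add: atMost_atLeast0 sum.atLeast_Suc_atMost)
  moreover have "(\<Sum>x\<in>{1..m}. real (m choose x) * l ^ x * pochhammer t x) \<ge> 0"
    using a by (intro sum_nonneg mult_nonneg_nonneg pochhammer_nonneg') auto
  ultimately show ?thesis by simp
qed

fun Dp :: "real \<Rightarrow> nat \<Rightarrow> real poly" where
  "Dp l 0 = 1"
| "Dp l (Suc 0) = [:1, l:]"
| "Dp l (Suc (Suc m)) = [:1 + l * real (Suc m), l:] * Dp l (Suc m) - smult (l * real (Suc m)) (Dp l m)"

lemma poly_Dp: "poly (Dp l m) t = Dfun l m t"
proof (induction l m rule: Dp.induct)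
  case (1 l) then show ?case by simp
next
  case (2 l) then show ?case using Dfun_Suc[of l 0 t] by (simp add: algebra_simps)
next
  case (3 l m) then show ?case using Dfun_rec3[of l m t] by (simp add: algebra_simps)
qed

lemma degree_Dp: "l > 0 \<Longrightarrow> degree (Dp l m) = m \<and> coeff (Dp l m) m = l ^ m"
proof (induction l m rule: Dp.induct)
  case (1 l) then show ?case by simp
next
  case (2 l) then show ?case by simp
next
  case (3 l m)
  then have IH1: "degree (Dp l (Suc m)) = Suc m" "coeff (Dp l (Suc m)) (Suc m) = l ^ Suc m"
    and IH0: "degree (Dp l m) = m" by auto
  have dA: "degree ([:1 + l * real (Suc m), l:] * Dp l (Suc m)) = Suc (Suc m)"
    using 3(3) IH1 by (subst degree_mult_eq) auto
  have cA: "coeff ([:1 + l * real (Suc m), l:] * Dp l (Suc m)) (Suc (Suc m)) = l ^ Suc (Suc m)"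
  proof -
    have "degree [:1 + l * real (Suc m), l:] = 1" using 3(3) by simp
    then have "coeff ([:1 + l * real (Suc m), l:] * Dp l (Suc m)) (Suc (Suc m)) = coeff [:1 + l * real (Suc m), l:] 1 * coeff (Dp l (Suc m)) (Suc m)"
      using coeff_mult_degree_sum[of "[:1 + l * real (Suc m), l:]" "Dp l (Suc m)"] IH1 by simp
    then show ?thesis using IH1 by simp
  qed
  have dB: "degree (smult (l * real (Suc m)) (Dp l m)) < Suc (Suc m)"
    using IH0 by (simp add: degree_smult_le le_less_trans[OF degree_smult_le])
  have "degree ([:1 + l * real (Suc m), l:] * Dp l (Suc m) - smult (l * real (Suc m)) (Dp l m)) = Suc (Suc m)"
    using dA dB degree_add_eq_left[of "- smult (l * real (Suc m)) (Dp l m)" "[:1 + l * real (Suc m), l:] * Dp l (Suc m)"]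
    by simp
  moreover have "coeff (smult (l * real (Suc m)) (Dp l m)) (Suc (Suc m)) = 0"
    using dB coeff_eq_0 by blast
  ultimately show ?case using cA by simp
qed

lemma factor_roots:
  fixes p :: "real poly" and r :: "nat \<Rightarrow> real"
  assumes "inj_on r {..<k}" "\<forall>i<k. poly p (r i) = 0"
  shows "\<exists>q. p = (\<Prod>i<k. [:- r i, 1:]) * q"
  using assms
proof (induction k)
  case 0 then show ?case by simp
next
  case (Suc k)
  have "inj_on r {..<k}"
    using Suc.prems(1) by (rule inj_on_subset) auto
  moreover have "\<forall>i<k. poly p (r i) = 0" using Suc.prems(2) by simp
  ultimately obtain q where q: "p = (\<Prod>i<k. [:- r i, 1:]) * q"
    using Suc.IH by blast
  have ne: "r k \<noteq> r i" if "i < k" for i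
  proof
    assume "r k = r i"
    with Suc.prems(1) have "k = i" unfolding inj_on_def using that by simp
    with that show False by simp
  qed
  have "poly (\<Prod>i<k. [:- r i, 1:]) (r k) = (\<Prod>i<k. r k - r i)"
    by (simp add: poly_prod)
  also have "\<dots> \<noteq> 0"
    using ne by (simp add: prod_zero_iff)
  moreover have "poly p (r k) = 0" using Suc.prems(2) by simp
  ultimately have "poly q (r k) = 0"
    using q by (simp add: poly_mult)
  then obtain q' where "q = [:- r k, 1:] * q'"
    unfolding poly_eq_0_iff_dvd by (elim dvdE)
  then have "p = ((\<Prod>i<k. [:- r i, 1:]) * [:- r k, 1:]) * q'"
    using q by (simp only: mult.assoc)
  then show ?case by (intro exI[of _ q']) (simp only: prod.lessThan_Suc)
qed

lemma prod_lin_props: "degree (\<Prod>i<k. [:- (r i :: real), 1:]) = k \<and> coeff (\<Prod>i<k. [:- (r i :: real), 1:]) k = 1"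
proof (induction k)
  case 0 then show ?case by simp
next
  case (Suc k)
  let ?P = "\<Prod>i<k. [:- (r i :: real), 1:]"
  have ne: "?P \<noteq> 0" using Suc by auto
  have "degree (?P * [:- r k, 1:]) = Suc k"
    using Suc ne by (subst degree_mult_eq) auto
  moreover have "coeff (?P * [:- r k, 1:]) (Suc k) = 1"
    using coeff_mult_degree_sum[of ?P "[:- r k, 1:]"] Suc by simp
  ultimately show ?case by (simp only: prod.lessThan_Suc)
qed

lemma prod_sign:
  fixes f :: "nat \<Rightarrow> real"
  assumes "\<forall>i<n. f i \<noteq> 0"
  shows "(-1) ^ card {i. i < n \<and> f i < 0} * (\<Prod>i<n. f i) > 0"
  using assms
proof (induction n)
  case 0 then show ?case by simp
next
  case (Suc n)
  have IH: "(-1) ^ card {i. i < n \<and> f i < 0} * (\<Prod>i<n. f i) > 0" using Suc by auto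
  show ?case
  proof (cases "f n < 0")
    case True
    then have "{i. i < Suc n \<and> f i < 0} = insert n {i. i < n \<and> f i < 0}" by auto
    then have "card {i. i < Suc n \<and> f i < 0} = Suc (card {i. i < n \<and> f i < 0})" by simp
    have "(-1) ^ card {i. i < Suc n \<and> f i < 0} * (\<Prod>i<Suc n. f i)
        = ((-1) ^ card {i. i < n \<and> f i < 0} * (\<Prod>i<n. f i)) * (- f n)"
      unfolding \<open>card {i. i < Suc n \<and> f i < 0} = Suc (card {i. i < n \<and> f i < 0})\<close> by simp
    moreover have "((-1) ^ card {i. i < n \<and> f i < 0} * (\<Prod>i<n. f i)) * (- f n) > 0"
      using mult_pos_pos[OF IH, of "- f n"] True by simp
    ultimately show ?thesis by linarith
  next
    case False
    then have "{i. i < Suc n \<and> f i < 0} = {i. i < n \<and> f i < 0}" by (auto simp: less_Suc_eq)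
    moreover have "f n > 0" using False Suc.prems by force
    ultimately show ?thesis using IH by (simp add: mult.assoc[symmetric] del: mult_minus_right)
  qed
qed

declare Dp.simps[simp del]

lemma Dfun_poly_eq: "Dfun l m = poly (Dp l m)"
  using poly_Dp by (intro ext) simp

lemma continuous_on_Dfun: "continuous_on S (Dfun l m)"
  unfolding Dfun_poly_eq by (intro continuous_intros)

lemma ivt0:
  fixes f :: "real \<Rightarrow> real"
  assumes "a < b" "continuous_on {a..b} f" "f a * f b < 0"
  shows "\<exists>x. a < x \<and> x < b \<and> f x = 0"
proof (cases "f a < 0")
  case True
  then have "f b > 0" using assms(3) by (simp add: mult_less_0_iff)
  then obtain x where "a \<le> x" "x \<le> b" "f x = 0"
    using IVT'[of f a 0 b] True assms by auto
  then show ?thesis using True \<open>f b > 0\<close> by (intro exI[of _ x]) (auto simp: order.order_iff_strict)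
next
  case False
  then have "f a > 0" "f b < 0" using assms(3) by (auto simp: mult_less_0_iff)
  then obtain x where "a \<le> x" "x \<le> b" "f x = 0"
    using IVT2'[of f b 0 a] assms by auto
  then show ?thesis using \<open>f a > 0\<close> \<open>f b < 0\<close> by (intro exI[of _ x]) (auto simp: order.order_iff_strict)
qed

lemma sign_opp:
  fixes x y :: real
  assumes "- ((-1) ^ k) * x > 0" "(-1) ^ k * y > 0"
  shows "x * y < 0"
proof (cases "even k")
  case True then show ?thesis using assms by (simp add: mult_less_0_iff)
next
  case False then show ?thesis using assms by (simp add: mult_less_0_iff)
qed

lemma Dfun_roots:
  assumes l: "l > 0"
  shows "\<exists>r. (\<forall>i<Suc m. r i < 0) \<and> (\<forall>i j. i < j \<longrightarrow> j < Suc m \<longrightarrow> r i < r j)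
    \<and> (\<forall>t. Dfun l (Suc m) t = l ^ Suc m * (\<Prod>i<Suc m. (t - r i)))
    \<and> (\<forall>i<Suc m. (-1) ^ (m - i) * Dfun l m (r i) > 0)"
proof (induction m)
  case 0
  have "Dfun l (Suc 0) t = l ^ Suc 0 * (\<Prod>i<Suc 0. (t - (- 1 / l)))" for t
    using Dfun_Suc[of l 0 t] l by (simp add: field_simps)
  then show ?case using l by (intro exI[of _ "\<lambda>_. - 1 / l"]) auto
next
  case (Suc m)
  then obtain r where r0: "\<forall>i<Suc m. r i < 0"
    and rinc: "\<forall>i j. i < j \<longrightarrow> j < Suc m \<longrightarrow> r i < r j"
    and rfac: "\<forall>t. Dfun l (Suc m) t = l ^ Suc m * (\<Prod>i<Suc m. (t - r i))"
    and rsg: "\<forall>i<Suc m. (-1) ^ (m - i) * Dfun l m (r i) > 0" by blast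
  have rmono: "r i \<le> r j" if "i \<le> j" "j < Suc m" for i j
  proof (cases "i = j")
    case False
    then have "i < j" using that by simp
    then show ?thesis using rinc that by (simp add: less_imp_le)
  qed simp
  define F where "F = Dfun l (Suc (Suc m))"
  have Fcont: "continuous_on S F" for S unfolding F_def by (rule continuous_on_Dfun)
  have Dz: "Dfun l (Suc m) (r i) = 0" if "i < Suc m" for i
  proof -
    have "(\<Prod>k<Suc m. (r i - r k)) = 0" using that by (intro prod_zero) auto
    then show ?thesis using rfac by simp
  qed
  have Fr: "F (r i) = - (l * real (Suc m)) * Dfun l m (r i)" if "i < Suc m" for i
    using Dfun_rec3[of l m "r i"] Dz[OF that] unfolding F_def by simp
  have Fsg: "(-1) ^ (Suc m - i) * F (r i) > 0" if "i < Suc m" for i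
  proof -
    have "Suc m - i = Suc (m - i)" using that by simp
    then have "(-1) ^ (Suc m - i) * F (r i) = ((-1) ^ (m - i) * Dfun l m (r i)) * (l * real (Suc m))"
      using Fr[OF that] by simp
    then show ?thesis using rsg that l by simp
  qed
  have F0: "F 0 \<ge> 1" unfolding F_def using l by (intro Dfun_ge1) auto
  have ex: "\<exists>x. 1 \<le> j \<and> j \<le> Suc m \<longrightarrow> r (j - 1) < x \<and> (j \<le> m \<longrightarrow> x < r j) \<and> x < 0 \<and> F x = 0" for j
  proof (cases "1 \<le> j \<and> j \<le> Suc m")
    case False then show ?thesis by blast
  next
    case True
    show ?thesis
    proof (cases "j \<le> m")
      case True2: True
      have lt: "r (j - 1) < r j" using rinc True True2 by auto
      have "Suc m - (j - 1) = Suc (Suc m - j)" using True True2 by simp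
      then have "- ((-1) ^ (Suc m - j)) * F (r (j - 1)) > 0"
        using Fsg[of "j - 1"] True by simp
      moreover have "(-1) ^ (Suc m - j) * F (r j) > 0" using Fsg[of j] True2 by simp
      ultimately have "F (r (j - 1)) * F (r j) < 0" by (rule sign_opp)
      then obtain x where "r (j - 1) < x" "x < r j" "F x = 0"
        using ivt0[OF lt Fcont] by blast
      moreover have "r j < 0" using r0 True2 by simp
      ultimately show ?thesis by (intro exI[of _ x]) auto
    next
      case False
      then have j: "j = Suc m" using True by simp
      have "F (r m) < 0" using Fsg[of m] by simp
      then have "F (r m) * F 0 < 0" using F0 by (simp add: mult_less_0_iff)
      moreover have "r m < 0" using r0 by simp
      ultimately obtain x where "r m < x" "x < 0" "F x = 0"
        using ivt0[OF _ Fcont] by blast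
      then show ?thesis using j by (intro exI[of _ x]) auto
    qed
  qed
  then obtain s' where s': "\<And>j. 1 \<le> j \<Longrightarrow> j \<le> Suc m \<Longrightarrow>
      r (j - 1) < s' j \<and> (j \<le> m \<longrightarrow> s' j < r j) \<and> s' j < 0 \<and> F (s' j) = 0"
    by metis
  define u where "u i = s' (Suc i)" for i
  have u_lo: "r i < u i" if "i < Suc m" for i using s'[of "Suc i"] that unfolding u_def by auto
  have u_hi: "u i < r (Suc i)" if "Suc i < Suc m" for i using s'[of "Suc i"] that unfolding u_def by auto
  have u_neg: "u i < 0" if "i < Suc m" for i using s'[of "Suc i"] that unfolding u_def by auto
  have u_root: "F (u i) = 0" if "i < Suc m" for i using s'[of "Suc i"] that unfolding u_def by auto
  have u_inc: "u i < u j" if "i < j" "j < Suc m" for i j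
  proof -
    have "u i < r (Suc i)" using u_hi that by simp
    also have "r (Suc i) \<le> r j" using rmono that by simp
    also have "r j < u j" using u_lo that by simp
    finally show ?thesis .
  qed
  have u_inj: "inj_on u {..<Suc m}"
  proof (rule inj_onI)
    fix i j assume "i \<in> {..<Suc m}" "j \<in> {..<Suc m}" "u i = u j"
    then show "i = j" using u_inc by (metis lessThan_iff linorder_neqE_nat less_irrefl)
  qed
  have Dp_ne: "Dp l (Suc (Suc m)) \<noteq> 0" using degree_Dp[OF l, of "Suc (Suc m)"] l by auto
  obtain q where q: "Dp l (Suc (Suc m)) = (\<Prod>i<Suc m. [:- u i, 1:]) * q"
  proof -
    have "\<forall>i<Suc m. poly (Dp l (Suc (Suc m))) (u i) = 0"
      using u_root unfolding F_def poly_Dp by simp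
    from factor_roots[OF u_inj this] show ?thesis using that by blast
  qed
  let ?A = "\<Prod>i<Suc m. [:- u i, 1:]"
  have Aprops: "degree ?A = Suc m" "coeff ?A (Suc m) = 1" using prod_lin_props[of u "Suc m"] by auto
  have A_ne: "?A \<noteq> 0" using Aprops by auto
  have q_ne: "q \<noteq> 0" using Dp_ne q by auto
  have degsum: "degree (Dp l (Suc (Suc m))) = Suc m + degree q"
    using q A_ne q_ne Aprops by (simp add: degree_mult_eq)
  then have dq: "degree q = 1" using degree_Dp[OF l, of "Suc (Suc m)"] by simp
  have "coeff (Dp l (Suc (Suc m))) (Suc m + degree q) = coeff ?A (Suc m) * coeff q (degree q)"
    using coeff_mult_degree_sum[of ?A q] q Aprops by simp
  then have cq: "coeff q 1 = l ^ Suc (Suc m)"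
    using degree_Dp[OF l, of "Suc (Suc m)"] Aprops dq by simp
  define c where "c = l ^ Suc (Suc m)"
  have c_pos: "c > 0" unfolding c_def using l by simp
  define s0 where "s0 = - coeff q 0 / c"
  have polyq: "poly q t = c * (t - s0)" for t
    using poly_altdef[of q t] dq cq c_pos l unfolding s0_def c_def by (simp add: field_simps)
  have Ffac: "F t = (\<Prod>i<Suc m. (t - u i)) * (c * (t - s0))" for t
    unfolding F_def Dfun_poly_eq q by (simp add: poly_prod polyq algebra_simps)
  have "(-1) ^ card {i. i < Suc m \<and> r 0 - u i < 0} * (\<Prod>i<Suc m. (r 0 - u i)) > 0"
  proof (rule prod_sign, intro allI impI)
    fix i assume "i < Suc m"
    then have "r 0 \<le> r i" "r i < u i" using rmono u_lo by auto
    then show "r 0 - u i \<noteq> 0" by simp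
  qed
  moreover have "{i. i < Suc m \<and> r 0 - u i < 0} = {..<Suc m}"
  proof -
    have "r 0 - u i < 0" if "i < Suc m" for i
      using rmono[of 0 i] u_lo[of i] that by simp
    then show ?thesis by auto
  qed
  ultimately have P0: "(-1) ^ Suc m * (\<Prod>i<Suc m. (r 0 - u i)) > 0" by simp
  have "(-1) ^ (Suc m) * F (r 0) > 0" using Fsg[of 0] by simp
  moreover have "(-1) ^ (Suc m) * F (r 0) = ((-1) ^ Suc m * (\<Prod>i<Suc m. (r 0 - u i))) * (c * (r 0 - s0))"
    using Ffac[of "r 0"] by (simp only: mult.assoc)
  ultimately have "((-1) ^ Suc m * (\<Prod>i<Suc m. (r 0 - u i))) * (c * (r 0 - s0)) > 0"
    by simp
  then have "c * (r 0 - s0) > 0" using zero_less_mult_pos P0 by blast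
  then have "r 0 - s0 > 0" using zero_less_mult_pos c_pos by blast
  then have s0_lt: "s0 < r 0" by simp
  define s where "s i = (if i = 0 then s0 else u (i - 1))" for i
  have inter: "(k < i \<longrightarrow> r k < s i) \<and> (i \<le> k \<longrightarrow> s i < r k)"
    if "i < Suc (Suc m)" "k < Suc m" for i k
  proof (cases i)
    case 0
    then show ?thesis using s0_lt rmono[of 0 k] that unfolding s_def by auto
  next
    case (Suc i')
    have a: "r k < s i" if "k < i"
    proof -
      have "r k \<le> r i'" using rmono that Suc \<open>i < Suc (Suc m)\<close> by simp
      also have "r i' < s i" using u_lo[of i'] Suc \<open>i < Suc (Suc m)\<close> unfolding s_def by simp
      finally show ?thesis .
    qed
    have b: "s i < r k" if "i \<le> k"
    proof -
      have "s i < r i" using u_hi[of i'] Suc that \<open>k < Suc m\<close> unfolding s_def by simp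
      also have "r i \<le> r k" using rmono that \<open>k < Suc m\<close> by simp
      finally show ?thesis .
    qed
    show ?thesis using a b by auto
  qed
  have s_last: "s (Suc m) < 0" using u_neg[of m] unfolding s_def by simp
  show ?case
  proof (intro exI[of _ s] conjI allI impI)
    fix i assume i: "i < Suc (Suc m)"
    show "s i < 0"
    proof (cases "i < Suc m")
      case True
      then have "s i < r i" using inter[OF i True] by simp
      then show ?thesis using r0 True by force
    next
      case False then have "i = Suc m" using i by simp
      then show ?thesis using s_last by simp
    qed
  next
    fix i j assume ij: "i < j" "j < Suc (Suc m)"
    then have "s i < r i" using inter[of i i] by simp
    also have "r i \<le> r (j - 1)" using rmono ij by simp
    also have "r (j - 1) < s j" using inter[of j "j - 1"] ij by simp
    finally show "s i < s j" .
  next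
    fix t
    have P: "(\<Prod>i<Suc (Suc m). (t - s i)) = (t - s0) * (\<Prod>i<Suc m. (t - u i))"
      by (subst prod.lessThan_Suc_shift) (simp add: s_def del: prod.lessThan_Suc)
    have "Dfun l (Suc (Suc m)) t = F t" by (simp add: F_def)
    also have "\<dots> = (\<Prod>i<Suc m. (t - u i)) * (c * (t - s0))" by (rule Ffac)
    also have "\<dots> = l ^ Suc (Suc m) * ((t - s0) * (\<Prod>i<Suc m. (t - u i)))"
      unfolding c_def by (simp only: mult_ac)
    also have "\<dots> = l ^ Suc (Suc m) * (\<Prod>i<Suc (Suc m). (t - s i))" by (simp only: P)
    finally show "Dfun l (Suc (Suc m)) t = l ^ Suc (Suc m) * (\<Prod>i<Suc (Suc m). (t - s i))" .
  next
    fix i assume i: "i < Suc (Suc m)"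
    have "(-1) ^ card {k. k < Suc m \<and> s i - r k < 0} * (\<Prod>k<Suc m. (s i - r k)) > 0"
    proof (rule prod_sign, intro allI impI)
      fix k assume "k < Suc m"
      then show "s i - r k \<noteq> 0" using inter[OF i, of k] by (cases "k < i") auto
    qed
    moreover have "{k. k < Suc m \<and> s i - r k < 0} = {i..<Suc m}"
    proof (intro set_eqI iffI)
      fix k assume "k \<in> {k. k < Suc m \<and> s i - r k < 0}"
      then have k: "k < Suc m" "s i < r k" by auto
      show "k \<in> {i..<Suc m}"
      proof (rule ccontr)
        assume "k \<notin> {i..<Suc m}"
        then have "k < i" using k by auto
        then show False using inter[OF i k(1)] k by auto
      qed
    next
      fix k assume "k \<in> {i..<Suc m}"
      then show "k \<in> {k. k < Suc m \<and> s i - r k < 0}" using inter[OF i] by auto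
    qed
    ultimately have "(-1) ^ (Suc m - i) * (\<Prod>k<Suc m. (s i - r k)) > 0" by simp
    then have "((-1) ^ (Suc m - i) * (\<Prod>k<Suc m. (s i - r k))) * l ^ Suc m > 0"
      using l by simp
    moreover have "(-1) ^ (Suc m - i) * Dfun l (Suc m) (s i) = ((-1) ^ (Suc m - i) * (\<Prod>k<Suc m. (s i - r k))) * l ^ Suc m"
      using rfac by (simp only: mult_ac)
    ultimately show "(-1) ^ (Suc m - i) * Dfun l (Suc m) (s i) > 0" by simp
  qed
qed

lemma Dfun_factor_pos:
  assumes l: "l > 0"
  shows "\<exists>\<rho>. (\<forall>i<m. \<rho> i > 0) \<and> (\<forall>t. Dfun l m t = l ^ m * (\<Prod>i<m. (t + \<rho> i)))"
proof (cases m)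
  case 0 then show ?thesis by simp
next
  case (Suc m')
  obtain r where "\<forall>i<Suc m'. r i < 0" "\<forall>t. Dfun l (Suc m') t = l ^ Suc m' * (\<Prod>i<Suc m'. (t - r i))"
    using Dfun_roots[OF l, of m'] by blast
  then show ?thesis using Suc by (intro exI[of _ "\<lambda>i. - r i"]) auto
qed

lemma Dfun_ratio_mono:
  assumes l: "l > 0" and st: "0 \<le> s" "s \<le> t"
  shows "Dfun l m s * Dfun l m (t + 1) \<le> Dfun l m t * Dfun l m (s + 1)"
proof -
  obtain \<rho> where \<rho>: "\<forall>i<m. \<rho> i > 0" "\<forall>t. Dfun l m t = l ^ m * (\<Prod>i<m. (t + \<rho> i))"
    using Dfun_factor_pos[OF l] by blast
  have "(\<Prod>i<m. (s + \<rho> i) * (t + 1 + \<rho> i)) \<le> (\<Prod>i<m. (t + \<rho> i) * (s + 1 + \<rho> i))"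
  proof (rule prod_mono, intro conjI)
    fix i assume "i \<in> {..<m}"
    then have "\<rho> i > 0" using \<rho> by auto
    then show "0 \<le> (s + \<rho> i) * (t + 1 + \<rho> i)" using st by simp
    have "(t + \<rho> i) * (s + 1 + \<rho> i) - (s + \<rho> i) * (t + 1 + \<rho> i) = t - s"
      by (simp add: algebra_simps)
    then show "(s + \<rho> i) * (t + 1 + \<rho> i) \<le> (t + \<rho> i) * (s + 1 + \<rho> i)" using st by simp
  qed
  then have "(l ^ m * l ^ m) * (\<Prod>i<m. (s + \<rho> i) * (t + 1 + \<rho> i)) \<le> (l ^ m * l ^ m) * (\<Prod>i<m. (t + \<rho> i) * (s + 1 + \<rho> i))"
    using l by (intro mult_left_mono) auto
  moreover have "Dfun l m s * Dfun l m (t + 1) = (l ^ m * l ^ m) * (\<Prod>i<m. (s + \<rho> i) * (t + 1 + \<rho> i))"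
    using \<rho>(2) by (simp only: prod.distrib mult_ac)
  moreover have "Dfun l m t * Dfun l m (s + 1) = (l ^ m * l ^ m) * (\<Prod>i<m. (t + \<rho> i) * (s + 1 + \<rho> i))"
    using \<rho>(2) by (simp only: prod.distrib mult_ac)
  ultimately show ?thesis by simp
qed

lemma Dfun_at0: "Dfun l m 0 = 1"
  by (induction m) (simp_all add: Dfun_Suc)

definition wt :: "real \<Rightarrow> real \<Rightarrow> real \<Rightarrow> real \<Rightarrow> real \<Rightarrow> nat \<Rightarrow> nat \<Rightarrow> real" where
  "wt lL lG g pb m n x = (\<Prod>k<x. birth_rate lL lG pb m n k / death_rate g (Suc k))"

definition Zt :: "real \<Rightarrow> real \<Rightarrow> real \<Rightarrow> real \<Rightarrow> real \<Rightarrow> nat \<Rightarrow> real" where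
  "Zt lL lG g pb m n = (\<Sum>x\<le>n. wt lL lG g pb m n x)"

definition muf :: "real \<Rightarrow> real \<Rightarrow> real \<Rightarrow> nat pmf \<Rightarrow> real \<Rightarrow> nat \<Rightarrow> nat \<Rightarrow> real" where
  "muf lL lG g P m n x = (if x \<le> n then pmf P n * wt lL lG g (pibar P) m n x / Zt lL lG g (pibar P) m n else 0)"

lemma gen_split:
  "gen lL lG g pb m n x y =
     (if x = y - 1 \<and> 0 < y then birth_rate lL lG pb m n x else 0)
   + (if x = Suc y then death_rate g x else 0)
   - (if x = y then birth_rate lL lG pb m n x + death_rate g x else 0)"
  unfolding gen_def by auto

lemma sum_delta_mult:
  "(\<Sum>x\<le>(n::nat). f x * (if x = a then c x else 0)) = (if a \<le> n then f a * c a else (0::real))"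
proof -
  have "(\<Sum>x\<le>n. f x * (if x = a then c x else 0)) = (\<Sum>x\<le>n. if x = a then f a * c a else 0)"
    by (intro sum.cong) auto
  also have "\<dots> = (if a \<le> n then f a * c a else 0)"
    by (cases "a \<le> n") (auto simp: sum.delta)
  finally show ?thesis .
qed

lemma gen_sum:
  assumes "y \<le> n"
  shows "(\<Sum>x\<le>n. f x * gen lL lG g pb m n x y) =
     (if 0 < y then f (y - 1) * birth_rate lL lG pb m n (y - 1) else 0)
   + (if y < n then f (Suc y) * death_rate g (Suc y) else 0)
   - f y * (birth_rate lL lG pb m n y + death_rate g y)"
proof -
  let ?B = "birth_rate lL lG pb m n" and ?D = "death_rate g"
  have "(\<Sum>x\<le>n. f x * gen lL lG g pb m n x y) =
     (\<Sum>x\<le>n. f x * (if x = y - 1 then (if 0 < y then ?B x else 0) else 0))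
   + (\<Sum>x\<le>n. f x * (if x = Suc y then ?D x else 0))
   - (\<Sum>x\<le>n. f x * (if x = y then ?B x + ?D x else 0))"
  proof -
    have "f x * gen lL lG g pb m n x y = f x * (if x = y - 1 then (if 0 < y then ?B x else 0) else 0)
      + f x * (if x = Suc y then ?D x else 0) - f x * (if x = y then ?B x + ?D x else 0)" for x
      unfolding gen_def by (auto simp: algebra_simps)
    then show ?thesis by (simp add: sum.distrib sum_subtractf)
  qed
  also have "\<dots> = (if 0 < y then f (y - 1) * ?B (y - 1) else 0)
   + (if y < n then f (Suc y) * ?D (Suc y) else 0)
   - f y * (?B y + ?D y)"
    unfolding sum_delta_mult using assms by auto
  finally show ?thesis .
qed

lemma birth_top: "birth_rate lL lG pb m n n = 0"
  by (cases "n = 0") (simp_all add: birth_rate_def)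

lemma death0: "death_rate g 0 = 0"
  by (simp add: death_rate_def)

lemma birth_nonneg:
  assumes "lL \<ge> 0" "lG \<ge> 0" "pb \<ge> 0" "m \<ge> 0" "k \<le> n"
  shows "birth_rate lL lG pb m n k \<ge> 0"
proof -
  have "1 - real k / real n \<ge> 0"
    using assms by (cases "n = 0") (auto simp: field_simps)
  then show ?thesis using assms unfolding birth_rate_def
    by (intro mult_nonneg_nonneg add_nonneg_nonneg) auto
qed

lemma wt_0 [simp]: "wt lL lG g pb m n 0 = 1"
  by (simp add: wt_def)

lemma wt_Suc: "wt lL lG g pb m n (Suc x) = wt lL lG g pb m n x * birth_rate lL lG pb m n x / death_rate g (Suc x)"
  by (simp add: wt_def)

lemma wt_nonneg:
  assumes "lL \<ge> 0" "lG \<ge> 0" "pb \<ge> 0" "m \<ge> 0" "g > 0" "x \<le> n"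
  shows "wt lL lG g pb m n x \<ge> 0"
  unfolding wt_def using assms
  by (intro prod_nonneg) (auto intro!: divide_nonneg_pos birth_nonneg simp: death_rate_def)

lemma Zt_ge1:
  assumes "lL \<ge> 0" "lG \<ge> 0" "pb \<ge> 0" "m \<ge> 0" "g > 0"
  shows "Zt lL lG g pb m n \<ge> 1"
proof -
  have "Zt lL lG g pb m n = 1 + (\<Sum>x\<in>{1..n}. wt lL lG g pb m n x)"
    unfolding Zt_def by (simp add: atMost_atLeast0 sum.atLeast_Suc_atMost)
  moreover have "(\<Sum>x\<in>{1..n}. wt lL lG g pb m n x) \<ge> 0"
    using assms by (intro sum_nonneg wt_nonneg) auto
  ultimately show ?thesis by simp
qed

lemma muf_stationary:
  assumes "lL \<ge> 0" "lG \<ge> 0" "g > 0" "m \<ge> 0"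
  shows "is_stationary lL lG g P m (muf lL lG g P m)"
proof -
  let ?pb = "pibar P"
  have pb: "?pb \<ge> 0" unfolding pibar_def by simp
  let ?B = "birth_rate lL lG ?pb m" and ?D = "death_rate g"
  let ?w = "wt lL lG g ?pb m" and ?Z = "Zt lL lG g ?pb m"
  have Zpos: "?Z n > 0" for n using Zt_ge1[OF assms(1,2) pb assms(4,3)] by (simp add: less_le_trans[OF zero_less_one])
  have db: "muf lL lG g P m n (Suc x) * ?D (Suc x) = muf lL lG g P m n x * ?B n x" if "x < n" for n x
  proof -
    have "?D (Suc x) > 0" using assms by (simp add: death_rate_def)
    then show ?thesis using that unfolding muf_def wt_Suc by (simp add: field_simps)
  qed
  show ?thesis unfolding is_stationary_def
  proof (intro conjI allI impI)
    fix n x show "0 \<le> muf lL lG g P m n x"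
      unfolding muf_def using Zpos[of n] wt_nonneg[OF assms(1,2) pb assms(4,3)]
      by (auto intro!: divide_nonneg_pos mult_nonneg_nonneg)
  next
    fix n x :: nat assume "n < x" then show "muf lL lG g P m n x = 0" by (simp add: muf_def)
  next
    fix n
    have "(\<Sum>x\<le>n. muf lL lG g P m n x) = (\<Sum>x\<le>n. pmf P n * ?w n x / ?Z n)"
      unfolding muf_def by simp
    also have "\<dots> = pmf P n * ?Z n / ?Z n"
      unfolding Zt_def by (simp add: sum_divide_distrib[symmetric] sum_distrib_left)
    also have "\<dots> = pmf P n" using Zpos[of n] by simp
    finally show "(\<Sum>x\<le>n. muf lL lG g P m n x) = pmf P n" .
  next
    fix n y :: nat assume y: "y \<le> n"
    let ?f = "muf lL lG g P m n"
    have t1: "(if 0 < y then ?f (y - 1) * ?B n (y - 1) else 0) = ?f y * ?D y"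
    proof (cases y)
      case 0 then show ?thesis by (simp add: death0)
    next
      case (Suc y') then show ?thesis using db[of y' n] y by simp
    qed
    have t2: "(if y < n then ?f (Suc y) * ?D (Suc y) else 0) = ?f y * ?B n y"
      using db[of y n] y birth_top[of lL lG ?pb m n] by (cases "y < n") auto
    show "(\<Sum>x\<le>n. ?f x * gen lL lG g ?pb m n x y) = 0"
      unfolding gen_sum[OF y] t1 t2 by (simp add: algebra_simps)
  qed
qed

lemma stationary_unique:
  assumes "g > 0" "is_stationary lL lG g P m mu"
    and "lL \<ge> 0" "lG \<ge> 0" "m \<ge> 0"
  shows "mu = muf lL lG g P m"
proof (intro ext)
  fix n x
  let ?pb = "pibar P"
  have pb: "?pb \<ge> 0" unfolding pibar_def by simp
  let ?B = "birth_rate lL lG ?pb m" and ?D = "death_rate g"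
  let ?w = "wt lL lG g ?pb m" and ?Z = "Zt lL lG g ?pb m"
  have st: "\<forall>n x. n < x \<longrightarrow> mu n x = 0" "(\<Sum>x\<le>n. mu n x) = pmf P n"
    "\<And>y. y \<le> n \<Longrightarrow> (\<Sum>x\<le>n. mu n x * gen lL lG g ?pb m n x y) = 0"
    using assms(2) unfolding is_stationary_def by auto
  have Dpos: "?D (Suc k) > 0" for k using assms(1) by (simp add: death_rate_def)
  have db: "mu n (Suc x) * ?D (Suc x) = mu n x * ?B n x" if "x < n" for x
    using that
  proof (induction x)
    case 0
    have "(\<Sum>x\<le>n. mu n x * gen lL lG g ?pb m n x 0) = 0" using st(3)[of 0] by simp
    then show ?case unfolding gen_sum[OF le0] using 0 by (simp add: death0)
  next
    case (Suc x)
    have le: "Suc x \<le> n" using Suc.prems by simp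
    have "(\<Sum>k\<le>n. mu n k * gen lL lG g ?pb m n k (Suc x)) = 0" using st(3)[OF le] by simp
    then have "mu n x * ?B n x + mu n (Suc (Suc x)) * ?D (Suc (Suc x)) - mu n (Suc x) * (?B n (Suc x) + ?D (Suc x)) = 0"
      using gen_sum[OF le, of "mu n" lL lG g ?pb m] Suc.prems by simp
    moreover have "mu n (Suc x) * ?D (Suc x) = mu n x * ?B n x" using Suc by simp
    ultimately show ?case by (simp add: algebra_simps)
  qed
  have mw: "mu n x = mu n 0 * ?w n x" if "x \<le> n" for x
    using that
  proof (induction x)
    case 0 then show ?case by simp
  next
    case (Suc x)
    have "mu n (Suc x) = mu n x * ?B n x / ?D (Suc x)"
      using db[of x] Suc.prems Dpos[of x] by (simp add: field_simps)
    then show ?case using Suc by (simp add: wt_Suc)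
  qed
  have "pmf P n = (\<Sum>x\<le>n. mu n 0 * ?w n x)"
    unfolding st(2)[symmetric] by (rule sum.cong[OF refl]) (rule mw, simp)
  also have "\<dots> = mu n 0 * ?Z n" unfolding Zt_def by (simp add: sum_distrib_left)
  finally have "pmf P n = mu n 0 * ?Z n" .
  moreover have "?Z n > 0" using Zt_ge1[OF assms(3,4) pb assms(5,1)] by (simp add: less_le_trans[OF zero_less_one])
  ultimately have m0: "mu n 0 = pmf P n / ?Z n" by (simp add: field_simps)
  show "mu n x = muf lL lG g P m n x"
  proof (cases "x \<le> n")
    case True then show ?thesis unfolding muf_def using mw[OF True] m0 by simp
  next
    case False then show ?thesis unfolding muf_def using st(1) by simp
  qed
qed

lemma mu_inf_eq:
  assumes "lL \<ge> 0" "lG \<ge> 0" "g > 0" "m \<ge> 0"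
  shows "mu_inf lL lG g P m = muf lL lG g P m"
  unfolding mu_inf_def
proof (rule the_equality)
  show "is_stationary lL lG g P m (muf lL lG g P m)" using muf_stationary assms by blast
next
  fix mu assume "is_stationary lL lG g P m mu"
  then show "mu = muf lL lG g P m" using stationary_unique assms by blast
qed

definition lam :: "real \<Rightarrow> real \<Rightarrow> nat \<Rightarrow> real" where
  "lam lL g n = lL / (g * real n)"

definition tau :: "real \<Rightarrow> real \<Rightarrow> real \<Rightarrow> real \<Rightarrow> nat \<Rightarrow> real" where
  "tau lL lG pb m n = lG * (real n / pb) * m / lL"

definition Fn :: "real \<Rightarrow> real \<Rightarrow> nat \<Rightarrow> real \<Rightarrow> real" where
  "Fn lL g n t = real n * lam lL g n * Dfun (lam lL g n) (n - 1) (t + 1) / Dfun (lam lL g n) n t"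

definition En :: "real \<Rightarrow> real \<Rightarrow> real \<Rightarrow> real \<Rightarrow> real \<Rightarrow> nat \<Rightarrow> real" where
  "En lL lG g pb m n = (\<Sum>x\<le>n. real x * wt lL lG g pb m n x) / Zt lL lG g pb m n"

lemma binom_step_real:
  "real (n choose x) * (real n - real x) = real (n choose Suc x) * real (Suc x)"
proof (cases "x \<le> n")
  case True
  have "Suc x * (n choose Suc x) = (n - x) * (n choose x)"
    using binomial_absorption[of x n] binomial_absorb_comp[of n x] by simp
  then have "real (Suc x) * real (n choose Suc x) = real (n - x) * real (n choose x)"
    by (metis of_nat_mult)
  then show ?thesis using True by (simp add: of_nat_diff algebra_simps)
next
  case False then show ?thesis by (simp add: binomial_eq_0)
qed

lemma wt_eq:
  assumes "lL > 0" "g > 0" "n \<ge> 1"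
  shows "wt lL lG g pb m n x = real (n choose x) * lam lL g n ^ x * pochhammer (tau lL lG pb m n) x"
proof (induction x)
  case 0 then show ?case by simp
next
  case (Suc x)
  let ?l = "lam lL g n" and ?t = "tau lL lG pb m n"
  have B: "birth_rate lL lG pb m n x / death_rate g (Suc x) = ?l * (real x + ?t) * (real n - real x) / real (Suc x)"
    using assms unfolding birth_rate_def death_rate_def lam_def tau_def
    by (simp add: field_simps)
  have "wt lL lG g pb m n (Suc x) = real (n choose x) * ?l ^ x * pochhammer ?t x * (?l * (real x + ?t) * (real n - real x) / real (Suc x))"
  proof -
    have "wt lL lG g pb m n (Suc x) = wt lL lG g pb m n x * (birth_rate lL lG pb m n x / death_rate g (Suc x))"
      by (simp add: wt_Suc)
    then show ?thesis using Suc B by simp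
  qed
  also have "\<dots> = (real (n choose x) * (real n - real x)) * ?l ^ Suc x * (pochhammer ?t x * (?t + real x)) / real (Suc x)"
    by (simp add: algebra_simps)
  also have "\<dots> = real (n choose Suc x) * ?l ^ Suc x * pochhammer ?t (Suc x)"
  proof -
    have "(real (n choose x) * (real n - real x)) * ?l ^ Suc x * (pochhammer ?t x * (?t + real x)) / real (Suc x)
        = (real (n choose Suc x) * real (Suc x)) * ?l ^ Suc x * pochhammer ?t (Suc x) / real (Suc x)"
      unfolding binom_step_real pochhammer_rec'[of ?t x] by (simp add: algebra_simps)
    also have "\<dots> = real (n choose Suc x) * ?l ^ Suc x * pochhammer ?t (Suc x)"
      by (simp del: of_nat_Suc)
    finally show ?thesis .
  qed
  finally show ?case .
qed

lemma Zt_eq: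
  assumes "lL > 0" "g > 0" "n \<ge> 1"
  shows "Zt lL lG g pb m n = Dfun (lam lL g n) n (tau lL lG pb m n)"
  unfolding Zt_def Dfun_def wt_eq[OF assms] by simp

lemma Nt_eq:
  assumes "lL > 0" "g > 0" "n \<ge> 1"
  shows "(\<Sum>x\<le>n. real x * wt lL lG g pb m n x)
     = real n * lam lL g n * tau lL lG pb m n * Dfun (lam lL g n) (n - 1) (tau lL lG pb m n + 1)"
proof -
  obtain k where n: "n = Suc k" using assms(3) by (cases n) auto
  show ?thesis
    unfolding wt_eq[OF assms] using Nsum_eq[of k "lam lL g n" "tau lL lG pb m n"] n
    by (simp add: mult.assoc)
qed

lemma lam_pos: "lL > 0 \<Longrightarrow> g > 0 \<Longrightarrow> n \<ge> 1 \<Longrightarrow> lam lL g n > 0"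
  unfolding lam_def by simp

lemma tau_nonneg: "lL > 0 \<Longrightarrow> lG \<ge> 0 \<Longrightarrow> pb \<ge> 0 \<Longrightarrow> m \<ge> 0 \<Longrightarrow> tau lL lG pb m n \<ge> 0"
  unfolding tau_def by simp

lemma En_eq:
  assumes "lL > 0" "g > 0" "n \<ge> 1"
  shows "En lL lG g pb m n = tau lL lG pb m n * Fn lL g n (tau lL lG pb m n)"
  unfolding En_def Fn_def Nt_eq[OF assms] Zt_eq[OF assms] by simp

lemma En_0: "En lL lG g pb m 0 = 0"
  unfolding En_def by simp

context
  fixes lL g :: real and n :: nat
  assumes lL: "lL > 0" and g: "g > 0" and n: "n \<ge> 1"
begin

private abbreviation "l \<equiv> lam lL g n"
private abbreviation "D' \<equiv> Dfun (lam lL g n) (n - 1)"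

lemma l_pos: "l > 0" using lam_pos lL g n by simp

lemma Dn_split: "Dfun l n t = D' t + l * t * D' (t + 1)"
  using Dfun_Suc[of l "n - 1" t] n by simp

lemma D'_pos: "t \<ge> 0 \<Longrightarrow> D' t \<ge> 1"
  using Dfun_ge1 l_pos by (simp add: less_imp_le)

lemma Dn_pos: "t \<ge> 0 \<Longrightarrow> Dfun l n t \<ge> 1"
  using Dfun_ge1 l_pos by (simp add: less_imp_le)

lemma Fn_pos: "t \<ge> 0 \<Longrightarrow> Fn lL g n t > 0"
  unfolding Fn_def using l_pos n D'_pos[of "t+1"] Dn_pos[of t]
  by (intro divide_pos_pos mult_pos_pos) auto

lemma Fn_at0: "Fn lL g n 0 = real n * l * D' 1"
  unfolding Fn_def using Dfun_at0 by simp

lemma Fn_strict_decr: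
  assumes st: "0 \<le> s" "s < t"
  shows "Fn lL g n t < Fn lL g n s"
proof -
  have mono: "D' s * D' (t + 1) \<le> D' t * D' (s + 1)"
    using Dfun_ratio_mono[OF l_pos, of s t "n - 1"] st by simp
  have pos: "l * (t - s) * D' (s + 1) * D' (t + 1) > 0"
    using l_pos st D'_pos[of "s+1"] D'_pos[of "t+1"] by (intro mult_pos_pos) auto
  have key: "D' (t + 1) * Dfun l n s < D' (s + 1) * Dfun l n t"
  proof -
    have "D' (s + 1) * Dfun l n t - D' (t + 1) * Dfun l n s
        = (D' (s + 1) * D' t - D' (t + 1) * D' s) + l * (t - s) * D' (s + 1) * D' (t + 1)"
      unfolding Dn_split by (simp add: algebra_simps)
    moreover have "D' (s + 1) * D' t - D' (t + 1) * D' s \<ge> 0" using mono by (simp add: algebra_simps)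
    ultimately show ?thesis using pos by linarith
  qed
  have Ds: "Dfun l n s > 0" and Dt: "Dfun l n t > 0" using Dn_pos st by (auto intro: less_le_trans[OF zero_less_one])
  have "D' (t + 1) / Dfun l n t < D' (s + 1) / Dfun l n s"
    using key Ds Dt by (simp add: divide_simps)
  then have "(real n * l) * (D' (t + 1) / Dfun l n t) < (real n * l) * (D' (s + 1) / Dfun l n s)"
    using n l_pos by (intro mult_strict_left_mono) auto
  then show ?thesis unfolding Fn_def by simp
qed

lemma Fn_mono: "0 \<le> s \<Longrightarrow> s \<le> t \<Longrightarrow> Fn lL g n t \<le> Fn lL g n s"
  using Fn_strict_decr by (cases "s = t") (auto simp: less_imp_le)

lemma tFn_le: "t \<ge> 0 \<Longrightarrow> t * Fn lL g n t \<le> real n"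
proof -
  assume t: "t \<ge> 0"
  have Dp: "Dfun l n t > 0" using Dn_pos t by (auto intro: less_le_trans[OF zero_less_one])
  have "t * Fn lL g n t = real n * (l * t * D' (t + 1)) / Dfun l n t"
    unfolding Fn_def by (simp add: algebra_simps)
  also have "\<dots> \<le> real n * Dfun l n t / Dfun l n t"
    using Dp D'_pos[of t] t by (intro divide_right_mono mult_left_mono) (auto simp: Dn_split)
  also have "\<dots> = real n" using Dp by simp
  finally show ?thesis .
qed

lemma Fn_cont: "continuous_on {0..} (Fn lL g n)"
proof -
  have nz: "\<forall>t\<in>{0..}. Dfun l n t \<noteq> 0" using Dn_pos by fastforce
  have "continuous_on {0..} (\<lambda>t. real n * l * D' (t + 1) / Dfun l n t)"
    using nz
    by (intro continuous_intros continuous_on_compose2[OF continuous_on_Dfun[of UNIV], where f="\<lambda>t. t + 1", simplified]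
        continuous_on_Dfun) auto
  then show ?thesis unfolding Fn_def .
qed

end

context
  fixes lL g :: real and n :: nat
  assumes lL: "lL > 0" and g: "g > 0" and n: "n \<ge> 1"
begin

private abbreviation "V \<equiv> jump_dist lL g n"
private definition "pu x = birth_rate lL 0 1 0 n x / hold_rate lL g n x"
private definition "pd x = death_rate g x / hold_rate lL g n x"
private definition "S K x = (\<Sum>k<K. V k x)"

lemma b0_eq: "birth_rate lL 0 1 0 n x = lL * real x * (1 - real x / real n)"
  by (simp add: birth_rate_def)

lemma b0_nonneg: "x \<le> n \<Longrightarrow> birth_rate lL 0 1 0 n x \<ge> 0"
  using birth_nonneg[of lL 0 1 0 x n] lL by simp

lemma b0_top: "birth_rate lL 0 1 0 n n = 0"
  by (rule birth_top)

lemma q_pos: "1 \<le> x \<Longrightarrow> x \<le> n \<Longrightarrow> hold_rate lL g n x > 0"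
  unfolding hold_rate_def death_rate_def using b0_nonneg[of x] g
  by (intro add_nonneg_pos) auto

lemma pu_nonneg: "1 \<le> x \<Longrightarrow> x \<le> n \<Longrightarrow> pu x \<ge> 0"
  unfolding pu_def using q_pos b0_nonneg by (simp add: less_imp_le)

lemma pd_pos: "1 \<le> x \<Longrightarrow> x \<le> n \<Longrightarrow> pd x > 0"
  unfolding pd_def death_rate_def using q_pos g by simp

lemma pu_pd: "1 \<le> x \<Longrightarrow> x \<le> n \<Longrightarrow> pu x + pd x = 1"
  unfolding pu_def pd_def using q_pos[of x] by (simp add: hold_rate_def add_divide_distrib[symmetric])

lemma pu_top: "pu n = 0"
  unfolding pu_def using b0_top by simp

lemma V_props: "V k x \<ge> 0 \<and> (x = 0 \<longrightarrow> V k x = 0) \<and> (n < x \<longrightarrow> V k x = 0) \<and> (Suc k < x \<longrightarrow> V k x = 0)"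
proof (induction k arbitrary: x)
  case 0 then show ?case using n by auto
next
  case (Suc k)
  have t1: "(if 2 \<le> x then V k (x - 1) * pu (x - 1) else 0) \<ge> 0"
  proof (cases "2 \<le> x \<and> x - 1 \<le> n")
    case True then show ?thesis using Suc.IH[of "x - 1"] pu_nonneg[of "x - 1"] by auto
  next
    case False then show ?thesis using Suc.IH[of "x - 1"] by auto
  qed
  have t2: "V k (Suc x) * pd (Suc x) \<ge> 0"
  proof (cases "Suc x \<le> n")
    case True then show ?thesis using Suc.IH[of "Suc x"] pd_pos[of "Suc x"] by auto
  next
    case False then show ?thesis using Suc.IH[of "Suc x"] by auto
  qed
  have t1z: "(if 2 \<le> x then V k (x - 1) * pu (x - 1) else 0) = 0" if "n < x \<or> Suc (Suc k) < x"
  proof (cases "2 \<le> x")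
    case True
    show ?thesis
    proof (cases "x - 1 = n")
      case True2: True then show ?thesis using True pu_top by simp
    next
      case False then show ?thesis using Suc.IH[of "x - 1"] that True by auto
    qed
  qed simp
  have t2z: "V k (Suc x) * pd (Suc x) = 0" if "n < x \<or> Suc (Suc k) < x"
    using Suc.IH[of "Suc x"] that by auto
  have eq: "V (Suc k) x = (if x = 0 then 0 else (if 2 \<le> x then V k (x - 1) * pu (x - 1) else 0) + V k (Suc x) * pd (Suc x))"
    by (simp add: pu_def pd_def)
  show ?case unfolding eq using t1 t2 t1z t2z by auto
qed

lemma V_nonneg: "V k x \<ge> 0" using V_props by blast
lemma V_big: "n < x \<Longrightarrow> V k x = 0" using V_props by blast
lemma V_big2: "Suc k < x \<Longrightarrow> V k x = 0" using V_props by blast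

lemma S_big: "n < x \<Longrightarrow> S K x = 0" unfolding S_def using V_big by simp

lemma S_split: "1 \<le> z \<Longrightarrow> S K z = S K z * pu z + S K z * pd z"
proof (cases "z \<le> n")
  case True
  assume "1 \<le> z"
  then have "S K z * pu z + S K z * pd z = S K z * (pu z + pd z)" by (simp add: algebra_simps)
  then show ?thesis using pu_pd[OF \<open>1 \<le> z\<close> True] by simp
next
  case False then show ?thesis using S_big by simp
qed

lemma S_step: "1 \<le> z \<Longrightarrow> S (Suc K) z = (if z = 1 then 1 else 0) + (if 2 \<le> z then S K (z - 1) * pu (z - 1) else 0) + S K (Suc z) * pd (Suc z)"
proof -
  assume z: "1 \<le> z"
  have "S (Suc K) z = V 0 z + (\<Sum>k<K. V (Suc k) z)"
    unfolding S_def by (subst sum.lessThan_Suc_shift) simp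
  also have "(\<Sum>k<K. V (Suc k) z) = (\<Sum>k<K. (if 2 \<le> z then V k (z - 1) * pu (z - 1) else 0) + V k (Suc z) * pd (Suc z))"
    using z by (intro sum.cong) (auto simp: pu_def pd_def)
  also have "\<dots> = (if 2 \<le> z then S K (z - 1) * pu (z - 1) else 0) + S K (Suc z) * pd (Suc z)"
    unfolding S_def by (simp add: sum.distrib sum_distrib_right)
  finally show ?thesis using z by simp
qed

lemma flux_id: "1 \<le> y \<Longrightarrow> (\<Sum>z\<in>{1..y}. V K z) = 1 - S K y * pu y + S K (Suc y) * pd (Suc y) - S K 1 * pd 1"
proof (induction y rule: nat_induct_at_least)
  case base
  have "V K 1 = S (Suc K) 1 - S K 1" unfolding S_def by simp
  also have "\<dots> = 1 + S K 2 * pd 2 - (S K 1 * pu 1 + S K 1 * pd 1)"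
    using S_step[of 1 K] S_split[of 1 K] by (simp add: numeral_2_eq_2)
  finally show ?case by (simp add: numeral_2_eq_2)
next
  case (Suc y)
  have "V K (Suc y) = S (Suc K) (Suc y) - S K (Suc y)" unfolding S_def by simp
  also have "\<dots> = S K y * pu y + S K (Suc (Suc y)) * pd (Suc (Suc y)) - (S K (Suc y) * pu (Suc y) + S K (Suc y) * pd (Suc y))"
    using S_step[of "Suc y" K] S_split[of "Suc y" K] Suc.hyps by simp
  finally have "V K (Suc y) = \<dots>" .
  then show ?case using Suc.IH Suc.hyps by (simp add: sum.cl_ivl_Suc algebra_simps)
qed

lemma mass_id: "(\<Sum>z\<in>{1..n}. V K z) = 1 - S K 1 * pd 1"
  using flux_id[of n K] n pu_top S_big[of "Suc n" K] by simp

lemma flux_tail: "1 \<le> y \<Longrightarrow> y \<le> n \<Longrightarrow> S K y * pu y - S K (Suc y) * pd (Suc y) = (\<Sum>z\<in>{Suc y..n}. V K z)"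
proof -
  assume y: "1 \<le> y" "y \<le> n"
  have "(\<Sum>z\<in>{1..n}. V K z) = (\<Sum>z\<in>{1..y}. V K z) + (\<Sum>z\<in>{Suc y..n}. V K z)"
    using y by (subst sum.union_disjoint[symmetric]) (auto intro: sum.cong)
  then show ?thesis using flux_id[OF y(1), of K] mass_id[of K] by simp
qed

lemma S_nonneg: "S K x \<ge> 0" unfolding S_def using V_nonneg by (simp add: sum_nonneg)

lemma S_bounded: "\<exists>C. \<forall>K. S K y \<le> C"
proof (cases "1 \<le> y \<and> y \<le> n")
  case False
  then have "y = 0 \<or> n < y" by auto
  then have "S K y = 0" for K
    using S_big V_props unfolding S_def by auto
  then show ?thesis by auto
next
  case True
  have main: "y \<le> n \<longrightarrow> (\<exists>C. \<forall>K. S K y \<le> C)" if "1 \<le> y" for y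
    using that
  proof (induction y rule: nat_induct_at_least)
    case base
    have "S K 1 * pd 1 \<le> 1" for K
      using mass_id[of K] V_nonneg by (metis diff_ge_0_iff_ge sum_nonneg)
    then have "S K 1 \<le> 1 / pd 1" for K using pd_pos[of 1] n by (simp add: field_simps)
    then show ?case by blast
  next
    case (Suc y)
    show ?case
    proof
      assume le: "Suc y \<le> n"
      then obtain C where C: "\<forall>K. S K y \<le> C" using Suc by auto
      have "S K (Suc y) \<le> C * pu y / pd (Suc y)" for K
      proof -
        have "S K (Suc y) * pd (Suc y) \<le> S K y * pu y"
        proof -
          have "0 \<le> (\<Sum>z\<in>{Suc y..n}. V K z)" using V_nonneg by (simp add: sum_nonneg)
          then show ?thesis using flux_tail[of y K] Suc le by simp
        qed
        also have "\<dots> \<le> C * pu y" using C pu_nonneg[of y] Suc le by (intro mult_right_mono) auto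
        finally show ?thesis using pd_pos[of "Suc y"] le by (simp add: field_simps)
      qed
      then show "\<exists>C. \<forall>K. S K (Suc y) \<le> C" by blast
    qed
  qed
  then show ?thesis using True by blast
qed

lemma V_summable: "summable (\<lambda>k. V k y)"
proof -
  obtain C where "\<forall>K. S K y \<le> C" using S_bounded by blast
  then show ?thesis using V_nonneg unfolding S_def by (intro summableI_nonneg_bounded) auto
qed

definition "Sig y = (\<Sum>k. V k y)"

lemma S_lim: "(\<lambda>K. S K y) \<longlonglongrightarrow> Sig y"
  unfolding S_def Sig_def using summable_LIMSEQ[OF V_summable] .

lemma V_lim: "(\<lambda>K. V K y) \<longlonglongrightarrow> 0"
  using summable_LIMSEQ_zero[OF V_summable] .

lemma Sig1: "Sig 1 * pd 1 = 1"
proof -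
  have "(\<lambda>K. 1 - S K 1 * pd 1) \<longlonglongrightarrow> 1 - Sig 1 * pd 1"
    by (intro tendsto_intros S_lim)
  moreover have "(\<lambda>K. 1 - S K 1 * pd 1) \<longlonglongrightarrow> 0"
    unfolding mass_id[symmetric] using tendsto_sum[of "{1..n}" "\<lambda>z K. V K z" "\<lambda>_. 0" sequentially] V_lim by simp
  ultimately show ?thesis using LIMSEQ_unique by fastforce
qed

lemma Sig_step: "1 \<le> y \<Longrightarrow> y < n \<Longrightarrow> Sig (Suc y) * pd (Suc y) = Sig y * pu y"
proof -
  assume y: "1 \<le> y" "y < n"
  have "(\<lambda>K. S K y * pu y - S K (Suc y) * pd (Suc y)) \<longlonglongrightarrow> Sig y * pu y - Sig (Suc y) * pd (Suc y)"
    by (intro tendsto_intros S_lim)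
  moreover have "(\<lambda>K. S K y * pu y - S K (Suc y) * pd (Suc y)) \<longlonglongrightarrow> 0"
    using flux_tail[of y] y tendsto_sum[of "{Suc y..n}" "\<lambda>z K. V K z" "\<lambda>_. 0" sequentially] V_lim by simp
  ultimately show ?thesis using LIMSEQ_unique by fastforce
qed

definition "H x = Sig x / hold_rate lL g n x"

lemma H_formula: "1 \<le> x \<Longrightarrow> x \<le> n \<Longrightarrow>
   real x * H x = lam lL g n ^ (x - 1) * real ((n - 1) choose (x - 1)) * fact (x - 1) / g"
proof (induction x rule: nat_induct_at_least)
  case base
  have pd1: "pd 1 = g / hold_rate lL g n 1" by (simp add: pd_def death_rate_def)
  have "Sig 1 * (g / hold_rate lL g n 1) = 1" using Sig1 by (simp only: pd1)
  moreover have gq: "g / hold_rate lL g n 1 \<noteq> 0" using q_pos[of 1] n g by simp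
  ultimately have "Sig 1 = 1 / (g / hold_rate lL g n 1)"
    by (metis nonzero_mult_div_cancel_right)
  then have S1: "Sig 1 = hold_rate lL g n 1 / g" by simp
  have "H 1 = 1 / g" unfolding H_def S1 using q_pos[of 1] n g by simp
  then show ?case by simp
next
  case (Suc x)
  let ?q = "hold_rate lL g n" and ?l = "lam lL g n"
  have x: "1 \<le> x" "x < n" using Suc by auto
  have qx: "?q x > 0" and qx1: "?q (Suc x) > 0" using q_pos x by auto
  have "Sig (Suc x) * (g * real (Suc x)) / ?q (Suc x) = Sig x * birth_rate lL 0 1 0 n x / ?q x"
    using Sig_step[OF x] unfolding pd_def pu_def death_rate_def by simp
  then have "real (Suc x) * H (Suc x) * g = H x * birth_rate lL 0 1 0 n x"
    unfolding H_def using qx qx1 by (simp add: field_simps)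
  also have "\<dots> = (real x * H x) * (lL * (1 - real x / real n))"
    unfolding b0_eq by (simp add: algebra_simps)
  also have "\<dots> = (real x * H x) * (g * (?l * (real n - real x)))"
    unfolding lam_def using g n by (simp add: field_simps)
  finally have e: "real (Suc x) * H (Suc x) = (real x * H x) * (?l * (real n - real x))"
    using g by simp
  have bs: "real ((n - 1) choose (x - 1)) * (real (n - 1) - real (x - 1)) = real ((n - 1) choose x) * real x"
    using binom_step_real[of "n - 1" "x - 1"] x by simp
  have nx: "real (n - 1) - real (x - 1) = real n - real x" using x by (simp add: of_nat_diff)
  have fx: "fact x = real x * fact (x - 1)" using x by (cases x) auto
  have lp: "?l ^ (x - 1) * ?l = ?l ^ x" using x by (cases x) auto
  have k: "real ((n - 1) choose (x - 1)) * (real n - real x) = real ((n - 1) choose x) * real x"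
    using bs nx by simp
  have "real (Suc x) * H (Suc x) = (?l ^ (x - 1) * real ((n - 1) choose (x - 1)) * fact (x - 1) / g) * (?l * (real n - real x))"
    unfolding e Suc.IH[OF less_imp_le[OF x(2)]] ..
  also have "\<dots> = (?l ^ (x - 1) * ?l) * (real ((n - 1) choose (x - 1)) * (real n - real x)) * fact (x - 1) / g"
    by (simp add: algebra_simps)
  also have "\<dots> = ?l ^ x * real ((n - 1) choose x) * (real x * fact (x - 1)) / g"
    unfolding k lp by (simp add: algebra_simps)
  also have "\<dots> = ?l ^ (Suc x - 1) * real ((n - 1) choose (Suc x - 1)) * fact (Suc x - 1) / g"
    unfolding fx[symmetric] by simp
  finally show ?case .
qed

lemma expected_area_eq: "expected_area lL g n = ennreal (Dfun (lam lL g n) (n - 1) 1 / g)"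
proof -
  let ?q = "hold_rate lL g n"
  define f where "f k x = V k x * real x / ?q x" for k x
  have f_nonneg: "f k x \<ge> 0" for k x
  proof (cases "1 \<le> x \<and> x \<le> n")
    case True then show ?thesis unfolding f_def using V_nonneg q_pos by (simp add: less_imp_le)
  next
    case False then have "x = 0 \<or> n < x" by auto
    then show ?thesis unfolding f_def using V_big V_props by auto
  qed
  have f_big: "f k x = 0" if "n < x \<or> Suc k < x" for k x
    unfolding f_def using V_big V_big2 that by auto
  have inner: "(\<Sum>x\<in>{1..Suc k}. ennreal (f k x)) = ennreal (\<Sum>x\<in>{1..n}. f k x)" for k
  proof -
    have "(\<Sum>x\<in>{1..Suc k}. f k x) = (\<Sum>x\<in>{1..n + Suc k}. f k x)"
      by (rule sum.mono_neutral_left) (auto intro: f_big)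
    also have "\<dots> = (\<Sum>x\<in>{1..n}. f k x)"
      by (rule sum.mono_neutral_right) (auto intro: f_big)
    finally have eq: "(\<Sum>x\<in>{1..Suc k}. f k x) = (\<Sum>x\<in>{1..n}. f k x)" .
    have "(\<Sum>x\<in>{1..Suc k}. ennreal (f k x)) = ennreal (\<Sum>x\<in>{1..Suc k}. f k x)"
      using f_nonneg by (intro sum_ennreal)
    then show ?thesis by (simp only: eq)
  qed
  have fsum: "summable (\<lambda>k. f k x)" for x
    unfolding f_def by (intro summable_divide summable_mult2 V_summable)
  have "expected_area lL g n = (\<Sum>k. ennreal (\<Sum>x\<in>{1..n}. f k x))"
    unfolding expected_area_def f_def[symmetric] inner ..
  also have "\<dots> = ennreal (\<Sum>k. \<Sum>x\<in>{1..n}. f k x)"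
    using f_nonneg fsum by (intro suminf_ennreal2 sum_nonneg summable_sum) auto
  also have "(\<Sum>k. \<Sum>x\<in>{1..n}. f k x) = (\<Sum>x\<in>{1..n}. \<Sum>k. f k x)"
    using fsum by (subst suminf_sum) auto
  also have "\<dots> = (\<Sum>x\<in>{1..n}. real x * H x)"
  proof (intro sum.cong refl)
    fix x assume "x \<in> {1..n}"
    have "(\<Sum>k. f k x) = Sig x * real x / ?q x"
      unfolding f_def Sig_def by (simp add: suminf_divide suminf_mult2[symmetric] V_summable summable_mult2)
    then show "(\<Sum>k. f k x) = real x * H x" unfolding H_def by simp
  qed
  also have "\<dots> = (\<Sum>x\<in>{1..n}. lam lL g n ^ (x - 1) * real ((n - 1) choose (x - 1)) * fact (x - 1) / g)"
    using H_formula by (intro sum.cong) auto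
  also have "\<dots> = (\<Sum>j\<le>n - 1. lam lL g n ^ j * real ((n - 1) choose j) * fact j / g)"
  proof -
    have "{1..n} = {Suc 0..Suc (n - 1)}" using n by simp
    then show ?thesis by (simp only: sum.shift_bounds_cl_Suc_ivl atLeast0AtMost) simp
  qed
  also have "\<dots> = Dfun (lam lL g n) (n - 1) 1 / g"
    unfolding Dfun_def pochhammer_fact[symmetric] by (simp add: sum_divide_distrib algebra_simps)
  finally show ?thesis .
qed

end

lemma suminf_strict:
  fixes f g :: "nat \<Rightarrow> real"
  assumes "summable f" "summable g" "\<And>n. f n \<le> g n" "f i < g i"
  shows "suminf f < suminf g"
proof -
  have "0 < (\<Sum>n. g n - f n)"
    using assms by (intro suminf_pos2[of _ i] summable_diff) auto
  also have "\<dots> = suminf g - suminf f" using suminf_diff[OF assms(2,1)] by simp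
  finally show ?thesis by simp
qed

context
  fixes lL lG g :: real and P :: "nat pmf"
  assumes lL: "lL > 0" and lG: "lG > 0" and g: "g > 0"
    and sq: "summable (\<lambda>n. (real n)^2 * pmf P n)"
begin

lemma summ1: "summable (\<lambda>n. real n * pmf P n)"
proof (rule summable_comparison_test[OF _ sq])
  show "\<exists>N. \<forall>n\<ge>N. norm (real n * pmf P n) \<le> (real n)^2 * pmf P n"
  proof (intro exI allI impI)
    fix n :: nat
    have "real n \<le> (real n)^2" by (cases n) (auto simp: power2_eq_square)
    then show "norm (real n * pmf P n) \<le> (real n)^2 * pmf P n"
      by (simp add: mult_right_mono)
  qed
qed

lemma pibar_eq: "pibar P = (\<Sum>n. real n * pmf P n)"
proof -
  have "Infinite_Set_Sum.abs_summable_on (\<lambda>x. pmf P x * real x) UNIV"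
    unfolding abs_summable_on_nat_iff' using summ1 by (simp add: mult.commute)
  then have "infsetsum (\<lambda>x. pmf P x * real x) UNIV = (\<Sum>n. pmf P n * real n)"
    by (rule infsetsum_nat')
  then show ?thesis unfolding pibar_def pmf_expectation_eq_infsetsum by (simp add: mult.commute)
qed

lemma pb_nonneg: "pibar P \<ge> 0" unfolding pibar_def by simp

definition "Tm m n = pmf P n * En lL lG g (pibar P) m n"
definition "kappa n = lG * real n / (pibar P * lL)"
definition "cc n = pmf P n * kappa n * Fn lL g n 0"

lemma kappa_nonneg: "kappa n \<ge> 0" unfolding kappa_def using lG lL pb_nonneg by simp

lemma kappa_pos: "pibar P > 0 \<Longrightarrow> n \<ge> 1 \<Longrightarrow> kappa n > 0" unfolding kappa_def using lG lL by simp

lemma tau_kappa: "tau lL lG (pibar P) m n = kappa n * m"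
  unfolding tau_def kappa_def by simp

lemma En_bounds: "m \<ge> 0 \<Longrightarrow> 0 \<le> En lL lG g (pibar P) m n \<and> En lL lG g (pibar P) m n \<le> real n"
proof (cases "n = 0")
  case True then show ?thesis by (simp add: En_0)
next
  case False
  assume m: "m \<ge> 0"
  then have n: "n \<ge> 1" using False by simp
  have t: "tau lL lG (pibar P) m n \<ge> 0" using tau_nonneg lL lG pb_nonneg m by simp
  show ?thesis unfolding En_eq[OF lL g n]
    using Fn_pos[OF lL g n t] tFn_le[OF lL g n t] t by simp
qed

lemma Tm_nonneg: "m \<ge> 0 \<Longrightarrow> Tm m n \<ge> 0"
  unfolding Tm_def using En_bounds by simp

lemma Tm_le: "m \<ge> 0 \<Longrightarrow> Tm m n \<le> real n * pmf P n"
proof -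
  assume m: "m \<ge> 0"
  have "pmf P n * En lL lG g (pibar P) m n \<le> pmf P n * real n"
    using En_bounds[OF m, of n] by (intro mult_left_mono) auto
  then show ?thesis unfolding Tm_def by (simp add: mult.commute)
qed

lemma Tm_summable: "m \<ge> 0 \<Longrightarrow> summable (Tm m)"
  by (rule summable_comparison_test[OF _ summ1]) (auto simp: Tm_nonneg Tm_le)

lemma mubar_eq: "m \<ge> 0 \<Longrightarrow> mubar lL lG g P m = (\<Sum>n. Tm m n)"
proof -
  assume m: "m \<ge> 0"
  have "(\<Sum>x\<le>n. real x * muf lL lG g P m n x) = Tm m n" for n
  proof -
    have "(\<Sum>x\<le>n. real x * muf lL lG g P m n x) = (\<Sum>x\<le>n. pmf P n * (real x * wt lL lG g (pibar P) m n x) / Zt lL lG g (pibar P) m n)"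
      unfolding muf_def by (intro sum.cong) auto
    also have "\<dots> = Tm m n"
      unfolding Tm_def En_def by (simp add: sum_divide_distrib[symmetric] sum_distrib_left[symmetric])
    finally show ?thesis .
  qed
  then show ?thesis unfolding mubar_def mu_inf_eq[OF less_imp_le[OF lL] less_imp_le[OF lG] g m] by simp
qed

lemma Tm_kappa: "m \<ge> 0 \<Longrightarrow> Tm m n = m * (pmf P n * kappa n * Fn lL g n (kappa n * m))"
proof (cases "n = 0")
  case True then show ?thesis by (simp add: Tm_def En_0 kappa_def)
next
  case False
  then have n: "n \<ge> 1" by simp
  show ?thesis unfolding Tm_def En_eq[OF lL g n] tau_kappa by (simp add: algebra_simps)
qed

lemma mubar_0: "mubar lL lG g P 0 = 0"
  using mubar_eq[of 0] Tm_kappa[of 0] by simp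

lemma mubar_le_pb: "m \<ge> 0 \<Longrightarrow> mubar lL lG g P m \<le> pibar P"
  unfolding mubar_eq pibar_eq using Tm_le Tm_summable summ1 by (intro suminf_le) auto

lemma good_n: "pibar P > 0 \<Longrightarrow> \<exists>n. n \<ge> 1 \<and> pmf P n > 0"
proof -
  assume "pibar P > 0"
  then have "0 < (\<Sum>n. real n * pmf P n)" unfolding pibar_eq .
  then obtain i where "0 < real i * pmf P i"
    using suminf_pos_iff[OF summ1] by auto
  then show ?thesis by (intro exI[of _ i]) (auto simp: zero_less_mult_iff)
qed

lemma ratio_strict:
  assumes pb: "pibar P > 0" and m: "0 < m1" "m1 < m2"
  shows "m1 * mubar lL lG g P m2 < m2 * mubar lL lG g P m1"
proof -
  obtain i where i: "i \<ge> 1" "pmf P i > 0" using good_n pb by blast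
  have le: "m1 * Tm m2 n \<le> m2 * Tm m1 n" for n
  proof (cases "n = 0")
    case True then show ?thesis using Tm_kappa m by (simp add: kappa_def)
  next
    case False
    then have n: "n \<ge> 1" by simp
    have "Fn lL g n (kappa n * m2) \<le> Fn lL g n (kappa n * m1)"
      using Fn_mono[OF lL g n] kappa_pos[OF pb n] m by (intro Fn_mono[OF lL g n]) (auto intro: mult_left_mono)
    then have "m1 * m2 * (pmf P n * kappa n) * Fn lL g n (kappa n * m2) \<le> m1 * m2 * (pmf P n * kappa n) * Fn lL g n (kappa n * m1)"
      using m kappa_nonneg by (intro mult_left_mono) auto
    then show ?thesis using Tm_kappa m by (simp add: algebra_simps)
  qed
  have lt: "m1 * Tm m2 i < m2 * Tm m1 i"
  proof -
    have "Fn lL g i (kappa i * m2) < Fn lL g i (kappa i * m1)"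
      using kappa_pos[OF pb i(1)] m by (intro Fn_strict_decr[OF lL g i(1)]) auto
    then have "(m1 * m2 * (pmf P i * kappa i)) * Fn lL g i (kappa i * m2) < (m1 * m2 * (pmf P i * kappa i)) * Fn lL g i (kappa i * m1)"
      using m kappa_pos[OF pb i(1)] i by (intro mult_strict_left_mono) auto
    then show ?thesis using Tm_kappa m by (simp add: algebra_simps)
  qed
  have "m1 * mubar lL lG g P m2 = (\<Sum>n. m1 * Tm m2 n)"
    using m by (simp add: mubar_eq suminf_mult Tm_summable)
  also have "\<dots> < (\<Sum>n. m2 * Tm m1 n)"
    using m le lt by (intro suminf_strict summable_mult Tm_summable) auto
  also have "\<dots> = m2 * mubar lL lG g P m1"
    using m by (simp add: mubar_eq suminf_mult Tm_summable)
  finally show ?thesis .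
qed

lemma cc_nonneg: "cc n \<ge> 0"
proof (cases "n = 0")
  case True then show ?thesis by (simp add: cc_def kappa_def)
next
  case False then show ?thesis unfolding cc_def
    using kappa_nonneg Fn_pos[OF lL g, of n 0] by simp
qed

lemma Tm_le_cc: "m \<ge> 0 \<Longrightarrow> Tm m n \<le> m * cc n"
proof (cases "n = 0")
  case True
  assume "m \<ge> 0" then show ?thesis using True Tm_kappa by (simp add: cc_def kappa_def)
next
  case False
  assume m: "m \<ge> 0"
  then have n: "n \<ge> 1" using False by simp
  have "Fn lL g n (kappa n * m) \<le> Fn lL g n 0"
    using kappa_nonneg m by (intro Fn_mono[OF lL g n]) auto
  then have "(m * (pmf P n * kappa n)) * Fn lL g n (kappa n * m) \<le> (m * (pmf P n * kappa n)) * Fn lL g n 0"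
    using m kappa_nonneg by (intro mult_left_mono) auto
  then show ?thesis using Tm_kappa[OF m] unfolding cc_def by (simp add: algebra_simps)
qed

lemma Tm_lt_cc: "pibar P > 0 \<Longrightarrow> m > 0 \<Longrightarrow> n \<ge> 1 \<Longrightarrow> pmf P n > 0 \<Longrightarrow> Tm m n < m * cc n"
proof -
  assume pb: "pibar P > 0" and m: "m > 0" and n: "n \<ge> 1" and p: "pmf P n > 0"
  have "Fn lL g n (kappa n * m) < Fn lL g n 0"
    using kappa_pos[OF pb n] m by (intro Fn_strict_decr[OF lL g n]) auto
  then have "(m * (pmf P n * kappa n)) * Fn lL g n (kappa n * m) < (m * (pmf P n * kappa n)) * Fn lL g n 0"
    using m kappa_pos[OF pb n] p by (intro mult_strict_left_mono) auto
  then show ?thesis using Tm_kappa m unfolding cc_def by (simp add: algebra_simps)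
qed

lemma R0_zero: "pibar P = 0 \<Longrightarrow> R0 lL lG g P = 0"
  unfolding R0_def by simp

lemma R0_eq: "pibar P > 0 \<Longrightarrow> R0 lL lG g P = (\<Sum>n. ennreal (cc n))"
proof -
  assume pb: "pibar P > 0"
  have trm: "ennreal (lG / pibar P) * (ennreal (real n * pmf P n) * expected_area lL g n) = ennreal (cc n)" for n
  proof (cases "n = 0")
    case True then show ?thesis by (simp add: cc_def kappa_def)
  next
    case False
    then have n: "n \<ge> 1" by simp
    have "ennreal (lG / pibar P) * (ennreal (real n * pmf P n) * expected_area lL g n)
        = ennreal (lG / pibar P * (real n * pmf P n) * (Dfun (lam lL g n) (n - 1) 1 / g))"
    proof -
      have a: "lG / pibar P \<ge> 0" using lG pb by simp
      have b: "real n * pmf P n \<ge> 0" by simp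
      have c: "Dfun (lam lL g n) (n - 1) 1 / g \<ge> 0"
        using Dfun_ge1[of "lam lL g n" 1 "n - 1"] lam_pos[OF lL g n] g by simp
      have "ennreal (lG / pibar P * (real n * pmf P n) * (Dfun (lam lL g n) (n - 1) 1 / g))
          = ennreal (lG / pibar P) * ennreal (real n * pmf P n) * ennreal (Dfun (lam lL g n) (n - 1) 1 / g)"
        by (simp only: ennreal_mult[OF mult_nonneg_nonneg[OF a b] c] ennreal_mult[OF a b])
      then show ?thesis unfolding expected_area_eq[OF lL g n] by (simp only: mult.assoc)
    qed
    also have "lG / pibar P * (real n * pmf P n) * (Dfun (lam lL g n) (n - 1) 1 / g) = cc n"
      unfolding cc_def kappa_def Fn_at0[OF lL g n] lam_def using lL g pb n by (simp add: field_simps)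
    finally show ?thesis .
  qed
  have "R0 lL lG g P = (\<Sum>n. ennreal (lG / pibar P) * (ennreal (real n * pmf P n) * expected_area lL g n))"
    unfolding R0_def by (rule ennreal_suminf_cmult[symmetric])
  also have "\<dots> = (\<Sum>n. ennreal (cc n))" unfolding trm ..
  finally show ?thesis .
qed

lemma Tm_cont: "continuous_on {0..} (\<lambda>m. Tm m n)"
proof (cases "n = 0")
  case True then show ?thesis by (simp add: Tm_def En_0)
next
  case False
  then have n: "n \<ge> 1" by simp
  have "continuous_on {0..} (\<lambda>m. pmf P n * (tau lL lG (pibar P) m n * Fn lL g n (tau lL lG (pibar P) m n)))"
  proof -
    have c1: "continuous_on {0..} (\<lambda>m. tau lL lG (pibar P) m n)"
      unfolding tau_def using lL by (intro continuous_intros) auto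
    have im: "(\<lambda>m. tau lL lG (pibar P) m n) ` {0..} \<subseteq> {0..}"
      using tau_nonneg[OF lL less_imp_le[OF lG] pb_nonneg] by auto
    have c2: "continuous_on {0..} (\<lambda>m. Fn lL g n (tau lL lG (pibar P) m n))"
      using continuous_on_compose2[OF Fn_cont[OF lL g n] c1 im] .
    show ?thesis by (intro continuous_intros c1 c2)
  qed
  moreover have "Tm m n = pmf P n * (tau lL lG (pibar P) m n * Fn lL g n (tau lL lG (pibar P) m n))" for m
    unfolding Tm_def En_eq[OF lL g n] ..
  ultimately show ?thesis by simp
qed

lemma mubar_cont: "continuous_on {0..} (mubar lL lG g P)"
proof -
  have ul: "uniform_limit {0..} (\<lambda>N m. \<Sum>n<N. Tm m n) (\<lambda>m. \<Sum>n. Tm m n) sequentially"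
    by (rule Weierstrass_m_test[OF _ summ1]) (auto simp: Tm_nonneg Tm_le)
  have "continuous_on {0..} (\<lambda>m. \<Sum>n. Tm m n)"
    by (rule uniform_limit_theorem[OF _ ul]) (auto intro!: always_eventually continuous_on_sum Tm_cont)
  then show ?thesis by (rule continuous_on_cong[THEN iffD1, rotated 2]) (auto simp: mubar_eq)
qed

end

theorem corollary7p5:
  fixes lL lG g :: real and P :: "nat pmf"
  assumes "lL > 0" and "lG > 0" and "g > 0"
    and "summable (\<lambda>n. (real n)^2 * pmf P n)"
  shows "(R0 lL lG g P \<le> 1 \<longrightarrow>
            {m \<in> {0..pibar P}. mubar lL lG g P m = m} = {0})
       \<and> (R0 lL lG g P > 1 \<longrightarrow>
            (\<exists>!m. m \<in> {0<..pibar P} \<and> mubar lL lG g P m = m))"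
proof -
  note A = assms
  let ?pb = "pibar P"
  let ?mb = "mubar lL lG g P"
  have pb0: "?pb \<ge> 0" by (rule pb_nonneg[OF A])
  have mb0: "?mb 0 = 0" by (rule mubar_0[OF A])
  have part1: "R0 lL lG g P \<le> 1 \<longrightarrow> {m \<in> {0..?pb}. ?mb m = m} = {0}"
  proof
    assume R: "R0 lL lG g P \<le> 1"
    show "{m \<in> {0..?pb}. ?mb m = m} = {0}"
    proof (intro set_eqI iffI)
      fix m assume "m \<in> {m \<in> {0..?pb}. ?mb m = m}"
      then have m: "0 \<le> m" "m \<le> ?pb" "?mb m = m" by auto
      show "m \<in> {0}"
      proof (rule ccontr)
        assume "m \<notin> {0}"
        then have mpos: "m > 0" using m by simp
        then have pb: "?pb > 0" using m by simp
        have R0e: "R0 lL lG g P = (\<Sum>n. ennreal (cc lL lG g P n))" by (rule R0_eq[OF A pb])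
        have ccs: "summable (cc lL lG g P)"
          using R R0e cc_nonneg[OF A] by (intro summable_suminf_not_top) (auto simp: top_unique)
        have "ennreal (\<Sum>n. cc lL lG g P n) \<le> 1"
          using R R0e suminf_ennreal2[OF cc_nonneg[OF A] ccs] by simp
        then have ccle: "(\<Sum>n. cc lL lG g P n) \<le> 1" by simp
        obtain i where i: "i \<ge> 1" "pmf P i > 0" using good_n[OF A pb] by blast
        have "?mb m = (\<Sum>n. Tm lL lG g P m n)" by (rule mubar_eq[OF A m(1)])
        also have "\<dots> < (\<Sum>n. m * cc lL lG g P n)"
          by (rule suminf_strict[of _ _ i]) (use Tm_summable[OF A m(1)] ccs Tm_le_cc[OF A m(1)] Tm_lt_cc[OF A pb mpos i] in \<open>auto intro: summable_mult\<close>)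
        also have "\<dots> = m * (\<Sum>n. cc lL lG g P n)" using ccs by (rule suminf_mult)
        also have "\<dots> \<le> m" using ccle mpos by (simp add: mult_left_le)
        finally show False using m by simp
      qed
    next
      fix m assume "m \<in> {0::real}"
      then show "m \<in> {m \<in> {0..?pb}. ?mb m = m}" using pb0 mb0 by simp
    qed
  qed
  have part2: "R0 lL lG g P > 1 \<longrightarrow> (\<exists>!m. m \<in> {0<..?pb} \<and> ?mb m = m)"
  proof
    assume R: "R0 lL lG g P > 1"
    have pb: "?pb > 0"
    proof (rule ccontr)
      assume "\<not> ?pb > 0"
      then have "?pb = 0" using pb0 by simp
      then have "R0 lL lG g P = 0" by (rule R0_zero[OF A])
      then show False using R by simp
    qed
    let ?c = "cc lL lG g P" and ?k = "kappa lL lG P"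
    have "1 < (\<Sum>n. ennreal (?c n))" using R R0_eq[OF A pb] by simp
    then have "1 < (SUP N. \<Sum>n<N. ennreal (?c n))" by (simp add: suminf_eq_SUP)
    then obtain N where "1 < (\<Sum>n<N. ennreal (?c n))" by (auto simp: less_SUP_iff)
    then have N: "1 < (\<Sum>n<N. ?c n)" using cc_nonneg[OF A] by simp
    define k where "k m = (\<Sum>n<N. pmf P n * ?k n * Fn lL g n (?k n * m))" for m
    have k0: "k 0 = (\<Sum>n<N. ?c n)" unfolding k_def by (intro sum.cong) (simp_all add: cc_def[OF A])
    have term_cont: "continuous_on {0..} (\<lambda>m. pmf P n * ?k n * Fn lL g n (?k n * m))" for n
    proof (cases "n = 0")
      case True then show ?thesis by (simp add: kappa_def[OF A])
    next
      case False
      then have n: "n \<ge> 1" by simp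
      have c1: "continuous_on {0..} (\<lambda>m. ?k n * m)" by (intro continuous_intros)
      have im: "(\<lambda>m. ?k n * m) ` {0..} \<subseteq> {0..}" using kappa_nonneg[OF A, of n] by auto
      have "continuous_on {0..} (\<lambda>m. Fn lL g n (?k n * m))"
        using continuous_on_compose2[OF Fn_cont[OF A(1) A(3) n] c1 im] .
      then show ?thesis by (intro continuous_intros)
    qed
    have kcont: "continuous_on {0..} k" unfolding k_def by (intro continuous_on_sum term_cont)
    have k_anti: "k m' \<le> k m" if "0 \<le> m" "m \<le> m'" for m m'
      unfolding k_def
    proof (rule sum_mono)
      fix n assume "n \<in> {..<N}"
      show "pmf P n * ?k n * Fn lL g n (?k n * m') \<le> pmf P n * ?k n * Fn lL g n (?k n * m)"
      proof (cases "n = 0")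
        case True then show ?thesis by (simp add: kappa_def[OF A])
      next
        case False
        then have n: "n \<ge> 1" by simp
        have "Fn lL g n (?k n * m') \<le> Fn lL g n (?k n * m)"
          using kappa_nonneg[OF A, of n] that by (intro Fn_mono[OF A(1) A(3) n]) (auto intro: mult_left_mono)
        then show ?thesis using kappa_nonneg[OF A, of n] by (intro mult_left_mono) auto
      qed
    qed
    have "(\<lambda>j. k (inverse (real (Suc j)))) \<longlonglongrightarrow> k 0"
      by (rule continuous_on_tendsto_compose[OF kcont LIMSEQ_inverse_real_of_nat]) auto
    then have "\<forall>\<^sub>F j in sequentially. 1 < k (inverse (real (Suc j)))"
      using N k0 by (intro order_tendstoD(1)) auto
    then obtain N0 where "\<forall>j\<ge>N0. 1 < k (inverse (real (Suc j)))" unfolding eventually_sequentially by blast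
    then obtain j where j: "1 < k (inverse (real (Suc j)))" by blast
    define m0 where "m0 = min (inverse (real (Suc j))) ?pb"
    have m0pos: "m0 > 0" unfolding m0_def using pb by simp
    have m0le: "m0 \<le> ?pb" unfolding m0_def by simp
    have "k (inverse (real (Suc j))) \<le> k m0"
      using m0pos by (intro k_anti) (auto simp: m0_def)
    then have km0: "1 < k m0" using j by simp
    have "m0 * k m0 = (\<Sum>n<N. Tm lL lG g P m0 n)"
      unfolding k_def sum_distrib_left using Tm_kappa[OF A, of m0] m0pos by simp
    also have "\<dots> \<le> (\<Sum>n. Tm lL lG g P m0 n)"
      using m0pos Tm_summable[OF A] Tm_nonneg[OF A] by (intro sum_le_suminf) auto
    also have "\<dots> = ?mb m0" using m0pos by (simp add: mubar_eq[OF A])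
    finally have "m0 * k m0 \<le> ?mb m0" .
    moreover have "m0 < m0 * k m0" using km0 m0pos by simp
    ultimately have phi0: "?mb m0 - m0 > 0" by simp
    have phi1: "?mb ?pb - ?pb \<le> 0" using mubar_le_pb[OF A pb0] by simp
    have cont: "continuous_on {m0..?pb} (\<lambda>m. ?mb m - m)"
      using continuous_on_subset[OF mubar_cont[OF A], of "{m0..?pb}"] m0pos
      by (intro continuous_intros) auto
    obtain x where x: "m0 \<le> x" "x \<le> ?pb" "?mb x - x = 0"
      using IVT2'[of "\<lambda>m. ?mb m - m" ?pb 0 m0] phi0 phi1 m0le cont by auto
    show "\<exists>!m. m \<in> {0<..?pb} \<and> ?mb m = m"
    proof (rule ex1I[of _ x])
      show "x \<in> {0<..?pb} \<and> ?mb x = x" using x m0pos by auto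
    next
      fix y assume y: "y \<in> {0<..?pb} \<and> ?mb y = y"
      show "y = x"
      proof (rule ccontr)
        assume ne: "y \<noteq> x"
        have xp: "x > 0" "?mb x = x" using x m0pos by auto
        have yp: "y > 0" "?mb y = y" using y by auto
        show False
        proof (cases "y < x")
          case True
          have "y * ?mb x < x * ?mb y" by (rule ratio_strict[OF A pb yp(1) True])
          then show False using xp yp by (simp add: mult.commute)
        next
          case False
          then have "x < y" using ne by simp
          have "x * ?mb y < y * ?mb x" by (rule ratio_strict[OF A pb xp(1) \<open>x < y\<close>])
          then show False using xp yp by (simp add: mult.commute)
        qed
      qed
    qed
  qed
  show ?thesis using part1 part2 by blast
qed

end
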